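(* Let $T>0$ and let $u$ be a bounded weak solution with finite entropy production of $u_t+(u^2/2)_x=0$ on $[0,T]\times\mathbb{R}$, taking values in $[0,1]$. Let $\omega_h$ be a Lagrangian representation of the hypograph of $u$ and $\omega_e$ a Lagrangian representation of the epigraph of $u$. Then: (a) for $\omega_h$-a.e. $\gamma\in\Gamma$, for $\mathscr L^1$-a.e. $t\in[0,T]$, the point $(t,\gamma_x(t))$ is a Lebesgue point of $u$ and $\gamma_v(t)<u(t,\gamma_x(t))$; (b) for $\omega_e$-a.e. $\gamma\in\Gamma$, for $\mathscr L^1$-a.e. $t\in[0,T]$, the point $(t,\gamma_x(t))$ is a Lebesgue point of $u$ and $\gamma_v(t)>u(t,\gamma_x(t))$.
   Context: A bounded weak solution with finite entropy production is $u\in C^0([0,T];L^1(\mathbb{R}))\cap L^\infty([0,T]\times\mathbb{R})$ solving $u_t+(u^2/2)_x=0$ in distributions such that $\partial_t\eta(u)+\partial_xq(u)$ is a finite Radon measure for every smooth convex $\eta$ with $q'(v)=\eta'(v)v$. A Lebesgue point of $u$ is a point $z$ for which there is a value $u(z)$ with $\lim_{r\to0}r^{-2}\int_{B_r(z)}|u-u(z)|=0$; at Lebesgue points $u$ denotes this value. For $f:\mathbb{R}\to[0,1]$ set $E_f=\{(x,v)\in\mathbb{R}\times[0,1]:v\le f(x)\}$ and $E_f^c=\{(x,v)\in\mathbb{R}\times[0,1]:v\ge f(x)\}$. Let $\Gamma=\{\gamma=(\gamma_x,\gamma_v)\in BV([0,T];\mathbb{R}\times[0,1]):\gamma_x\text{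 Lipschitz}\}$ and $e_t(\gamma)=\gamma(t)$. A Radon measure $\omega_h$ on $\Gamma$ is a Lagrangian representation of the hypograph of $u$ if (1) $(e_t)_\sharp\omega_h=\mathscr L^2\llcorner E_{u(t)}$ for every $t\in[0,T)$; (2) $\omega_h$ is concentrated on curves with $\dot\gamma_x(t)=\gamma_v(t)$ for a.e. $t$; (3) $\int_\Gamma\mathrm{TotVar}_{[0,T)}\gamma_v\,d\omega_h<\infty$. A Lagrangian representation $\omega_e$ of the epigraph satisfies (2), (3) and $(e_t)_\sharp\omega_e=\mathscr L^2\llcorner E^c_{u(t)}$ for every $t\in[0,T]$. *)

theory Defs
  imports "HOL-Analysis.Analysis"
begin

definition smooth_fun :: "(real \<Rightarrow> real) \<Rightarrow> bool" where
  "smooth_fun f \<longleftrightarrow> (\<forall>n x. ((deriv ^^ n) f) differentiable (at x))"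

text \<open>Partial derivatives of a function of (t,x): True = d/dt, False = d/dx.\<close>
definition pderiv2 :: "bool \<Rightarrow> (real \<times> real \<Rightarrow> real) \<Rightarrow> real \<times> real \<Rightarrow> real" where
  "pderiv2 b f = (\<lambda>p. if b then deriv (\<lambda>s. f (s, snd p)) (fst p)
                           else deriv (\<lambda>y. f (fst p, y)) (snd p))"

definition partial_exists :: "bool \<Rightarrow> (real \<times> real \<Rightarrow> real) \<Rightarrow> real \<times> real \<Rightarrow> bool" where
  "partial_exists b f p \<longleftrightarrow> (if b then (\<lambda>s. f (s, snd p)) differentiable (at (fst p))
                                else (\<lambda>y. f (fst p, y)) differentiable (at (snd p)))"

definition iter_pderiv :: "bool list \<Rightarrow> (real \<times> real \<Rightarrow> real) \<Rightarrow> real \<times> real \<Rightarrow> real" where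
  "iter_pderiv ds f = foldr pderiv2 ds f"

definition smooth2 :: "(real \<times> real \<Rightarrow> real) \<Rightarrow> bool" where
  "smooth2 f \<longleftrightarrow> (\<forall>ds. continuous_on UNIV (iter_pderiv ds f) \<and>
                        (\<forall>b p. partial_exists b (iter_pderiv ds f) p))"

definition tsupport :: "(real \<times> real \<Rightarrow> real) \<Rightarrow> (real \<times> real) set" where
  "tsupport f = closure {p. f p \<noteq> 0}"

text \<open>Test functions in C_c^infinity((0,T) x R); points are (t,x).\<close>
definition test_fun :: "real \<Rightarrow> (real \<times> real \<Rightarrow> real) \<Rightarrow> bool" where
  "test_fun T \<phi> \<longleftrightarrow> smooth2 \<phi> \<and> compact (tsupport \<phi>) \<and> tsupport \<phi> \<subseteq> {0<..<T} \<times> UNIV"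

definition dt :: "(real \<times> real \<Rightarrow> real) \<Rightarrow> real \<times> real \<Rightarrow> real" where
  "dt \<phi> = pderiv2 True \<phi>"

definition dx :: "(real \<times> real \<Rightarrow> real) \<Rightarrow> real \<times> real \<Rightarrow> real" where
  "dx \<phi> = pderiv2 False \<phi>"

text \<open>u t x is the value at time t and position x.
  u in C^0([0,T];L^1(R)) \<inter> L^\<infinity>([0,T] x R).\<close>
definition C0_L1_Linfty :: "real \<Rightarrow> (real \<Rightarrow> real \<Rightarrow> real) \<Rightarrow> bool" where
  "C0_L1_Linfty T u \<longleftrightarrow>
     set_borel_measurable lebesgue ({0..T} \<times> UNIV) (\<lambda>p. u (fst p) (snd p)) \<and>
     (\<exists>M. \<forall>t\<in>{0..T}. \<forall>x. \<bar>u t x\<bar> \<le> M) \<and>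
     (\<forall>t\<in>{0..T}. integrable lebesgue (u t)) \<and>
     (\<forall>t\<in>{0..T}. ((\<lambda>s. LINT x|lebesgue. \<bar>u s x - u t x\<bar>) \<longlongrightarrow> 0) (at t within {0..T}))"

definition weak_solution :: "real \<Rightarrow> (real \<Rightarrow> real \<Rightarrow> real) \<Rightarrow> bool" where
  "weak_solution T u \<longleftrightarrow>
     (\<forall>\<phi>. test_fun T \<phi> \<longrightarrow>
        (LINT p|lebesgue. u (fst p) (snd p) * dt \<phi> p
                         + (u (fst p) (snd p))\<^sup>2 / 2 * dx \<phi> p) = 0)"

text \<open>Finite entropy production: for every smooth convex entropy \<eta> with flux q, q' v = \<eta>' v * v,
  the distribution \<eta>(u)_t + q(u)_x on (0,T) x R is a finite (signed) Radon measure,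
  represented as the difference of two finite Borel measures.\<close>
definition finite_entropy_production :: "real \<Rightarrow> (real \<Rightarrow> real \<Rightarrow> real) \<Rightarrow> bool" where
  "finite_entropy_production T u \<longleftrightarrow>
     (\<forall>\<eta> q. smooth_fun \<eta> \<and> convex_on UNIV \<eta> \<and>
             (\<forall>v. (q has_real_derivative (deriv \<eta> v * v)) (at v)) \<longrightarrow>
        (\<exists>\<mu>1 \<mu>2 :: (real \<times> real) measure.
           finite_measure \<mu>1 \<and> finite_measure \<mu>2 \<and>
           sets \<mu>1 = sets lborel \<and> sets \<mu>2 = sets lborel \<and>
           (\<forall>\<phi>. test_fun T \<phi> \<longrightarrow>
              - (LINT p|lebesgue. \<eta> (u (fst p) (snd p)) * dt \<phi> p
                                 + q (u (fst p) (snd p)) * dx \<phi> p)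
              = (LINT p|\<mu>1. \<phi> p) - (LINT p|\<mu>2. \<phi> p))))"

definition bounded_weak_sol_fep :: "real \<Rightarrow> (real \<Rightarrow> real \<Rightarrow> real) \<Rightarrow> bool" where
  "bounded_weak_sol_fep T u \<longleftrightarrow>
     C0_L1_Linfty T u \<and> weak_solution T u \<and> finite_entropy_production T u"

definition lebesgue_point :: "(real \<Rightarrow> real \<Rightarrow> real) \<Rightarrow> real \<times> real \<Rightarrow> real \<Rightarrow> bool" where
  "lebesgue_point u z c \<longleftrightarrow>
     ((\<lambda>r. (LINT p:ball z r|lebesgue. \<bar>u (fst p) (snd p) - c\<bar>) / r\<^sup>2) \<longlongrightarrow> 0) (at_right 0)"

definition hypo :: "(real \<Rightarrow> real) \<Rightarrow> (real \<times> real) set" where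
  "hypo f = {(x, v). 0 \<le> v \<and> v \<le> 1 \<and> v \<le> f x}"

definition epi :: "(real \<Rightarrow> real) \<Rightarrow> (real \<times> real) set" where
  "epi f = {(x, v). 0 \<le> v \<and> v \<le> 1 \<and> v \<ge> f x}"

definition variation :: "real set \<Rightarrow> (real \<Rightarrow> 'a::real_normed_vector) \<Rightarrow> ennreal" where
  "variation S f = (SUP ts \<in> {ts. sorted ts \<and> set ts \<subseteq> S}.
       \<Sum>i < length ts - 1. ennreal (norm (f (ts ! (i + 1)) - f (ts ! i))))"

definition Curves :: "real \<Rightarrow> (real \<Rightarrow> real \<times> real) set" where
  "Curves T = {\<gamma>. (\<forall>t\<in>{0..T}. snd (\<gamma> t) \<in> {0..1}) \<and>
                  variation {0..T} \<gamma> < \<infinity> \<and>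
                  (\<exists>L. L-lipschitz_on {0..T} (\<lambda>t. fst (\<gamma> t)))}"

definition lagrangian_rep ::
  "real \<Rightarrow> real set \<Rightarrow> (real \<Rightarrow> (real \<times> real) set) \<Rightarrow> (real \<Rightarrow> real \<times> real) measure \<Rightarrow> bool" where
  "lagrangian_rep T I E \<omega> \<longleftrightarrow>
     space \<omega> = Curves T \<and>
     (\<forall>t\<in>I. (\<lambda>\<gamma>. \<gamma> t) \<in> measurable \<omega> lborel \<and>
        (\<forall>A \<in> sets lborel. emeasure (distr \<omega> lborel (\<lambda>\<gamma>. \<gamma> t)) A
                            = emeasure lebesgue (A \<inter> E t))) \<and>
     (AE \<gamma> in \<omega>. AE t in lborel. t \<in> {0..T} \<longrightarrow>
        ((\<lambda>s. fst (\<gamma> s)) has_real_derivative snd (\<gamma> t)) (at t within {0..T})) \<and>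
     (\<integral>\<^sup>+ \<gamma>. variation {0..<T} (\<lambda>s. snd (\<gamma> s)) \<partial>\<omega>) < \<infinity>"

definition lagrangian_rep_hypo :: "real \<Rightarrow> (real \<Rightarrow> real \<Rightarrow> real) \<Rightarrow> (real \<Rightarrow> real \<times> real) measure \<Rightarrow> bool" where
  "lagrangian_rep_hypo T u \<omega> \<longleftrightarrow> lagrangian_rep T {0..<T} (\<lambda>t. hypo (u t)) \<omega>"

definition lagrangian_rep_epi :: "real \<Rightarrow> (real \<Rightarrow> real \<Rightarrow> real) \<Rightarrow> (real \<Rightarrow> real \<times> real) measure \<Rightarrow> bool" where
  "lagrangian_rep_epi T u \<omega> \<longleftrightarrow> lagrangian_rep T {0..T} (\<lambda>t. epi (u t)) \<omega>"

end

theory Submission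
  imports Defs
begin

lemma density_bad_negligible:
  fixes E :: "'a::euclidean_space set"
  assumes E: "E \<in> sets lebesgue" and e: "e > 0"
  shows "negligible {z \<in> E. \<forall>d>0. \<exists>r. 0<r \<and> r<d \<and>
            measure lebesgue (ball z r - E) > e * measure lebesgue (ball z r)}"
proof -
  define S where "S = {z \<in> E. \<forall>d>0. \<exists>r. 0<r \<and> r<d \<and>
            measure lebesgue (ball z r - E) > e * measure lebesgue (ball z r)}"
  have SE: "S \<subseteq> E" by (auto simp: S_def)
  have Sx: "\<exists>r. 0<r \<and> r<d \<and> measure lebesgue (ball x r - E) > e * measure lebesgue (ball x r)"
    if "x \<in> S" "d > 0" for x d
    using that unfolding S_def by blast
  have "negligible (S \<inter> ball 0 (real n))" for n
    unfolding negligible_outer_le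
  proof (intro allI impI)
    fix \<epsilon> :: real assume "\<epsilon> > 0"
    define E' where "E' = E \<inter> ball 0 (real n)"
    have E': "E' \<in> sets lebesgue" using E by (simp add: E'_def sets.Int)
    obtain U0 where U0: "open U0" "E' \<subseteq> U0" "(U0 - E') \<in> lmeasurable"
        "emeasure lebesgue (U0 - E') < ennreal (e*\<epsilon>)"
      using sets_lebesgue_outer_open[OF E', of "e*\<epsilon>"] \<open>\<epsilon>>0\<close> e by (metis mult_pos_pos)
    define U where "U = U0 \<inter> ball 0 (real n)"
    have Uo: "open U" using U0 by (simp add: U_def open_Int)
    have EU: "E' \<subseteq> U" using U0 by (auto simp: U_def E'_def)
    have UE: "U - E \<subseteq> U0 - E'" by (auto simp: U_def E'_def)
    define K where "K = {(z,r). z \<in> S \<inter> ball 0 (real n) \<and> 0 < r \<and> ball z r \<subseteq> U \<and>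
             measure lebesgue (ball z r - E) > e * measure lebesgue (ball z r)}"
    obtain C where C: "countable C" "C \<subseteq> K"
      and pw: "pairwise (\<lambda>i j. disjnt (ball (fst i) (snd i)) (ball (fst j) (snd j))) C"
      and neg: "negligible ((S \<inter> ball 0 (real n)) - (\<Union>i\<in>C. ball (fst i) (snd i)))"
    proof (rule Vitali_covering_theorem_balls[of "S \<inter> ball 0 (real n)" K fst snd])
      fix x d assume x: "x \<in> S \<inter> ball 0 (real n)" and d: "(0::real) < d"
      then have "x \<in> U" using EU SE by (auto simp: E'_def)
      then obtain k where k: "k > 0" "ball x k \<subseteq> U" using Uo openE by blast
      have "min d k > 0" using d k by simp
      then obtain r where r: "0 < r" "r < min d k"
        "measure lebesgue (ball x r - E) > e * measure lebesgue (ball x r)"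
        using x Sx by blast
      have "ball x r \<subseteq> ball x k" using r by (intro subset_ball) simp
      then have "ball x r \<subseteq> U" using k by blast
      then have "(x,r) \<in> K" using x r by (auto simp: K_def)
      then show "\<exists>i. i \<in> K \<and> x \<in> ball (fst i) (snd i) \<and> snd i < d" using r by (intro exI[of _ "(x,r)"]) auto
    qed
    define B where "B i = ball (fst i) (snd i)" for i :: "'a \<times> real"
    have disj: "disjoint_family_on B C"
      using pw unfolding disjoint_family_on_def pairwise_def disjnt_def B_def by blast
    have disj2: "disjoint_family_on (\<lambda>i. B i - E) C"
      using disj unfolding disjoint_family_on_def by blast
    have BK: "B i \<subseteq> U \<and> e * measure lebesgue (B i) < measure lebesgue (B i - E)" if "i \<in> C" for i
    proof -
      have "i \<in> K" using that C by blast
      then show ?thesis unfolding K_def B_def by (cases i) simp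
    qed
    have Bfin: "B i \<in> lmeasurable" for i by (simp add: B_def)
    have BEfin: "B i - E \<in> lmeasurable" for i
      using E by (intro fmeasurable_Diff) (auto simp: B_def)
    have "ennreal e * emeasure lebesgue (\<Union>(B ` C)) = ennreal e * (\<integral>\<^sup>+i. emeasure lebesgue (B i) \<partial>count_space C)"
      using C disj by (subst emeasure_UN_countable) (auto simp: B_def)
    also have "\<dots> = (\<integral>\<^sup>+i. ennreal e * emeasure lebesgue (B i) \<partial>count_space C)"
      by (simp add: nn_integral_cmult)
    also have "\<dots> \<le> (\<integral>\<^sup>+i. emeasure lebesgue (B i - E) \<partial>count_space C)"
    proof (intro nn_integral_mono)
      fix i assume "i \<in> space (count_space C)"
      then have "e * measure lebesgue (B i) < measure lebesgue (B i - E)" using BK by auto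
      then show "ennreal e * emeasure lebesgue (B i) \<le> emeasure lebesgue (B i - E)"
        using Bfin[of i] BEfin[of i] e
        by (simp add: emeasure_eq_measure2 ennreal_mult[symmetric])
    qed
    also have "\<dots> = emeasure lebesgue (\<Union>i\<in>C. B i - E)"
      using C disj2 BEfin by (subst emeasure_UN_countable) auto
    also have "\<dots> \<le> emeasure lebesgue (U0 - E')"
    proof (rule emeasure_mono)
      show "(\<Union>i\<in>C. B i - E) \<subseteq> U0 - E'" using BK UE by blast
    qed (use U0 in auto)
    also have "\<dots> < ennreal (e*\<epsilon>)" by fact
    finally have lt: "ennreal e * emeasure lebesgue (\<Union>(B ` C)) < ennreal (e * \<epsilon>)" .
    have UBC: "\<Union>(B ` C) \<subseteq> ball 0 (real n)" using BK by (auto simp: U_def)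
    have UBCm: "\<Union>(B ` C) \<in> lmeasurable"
    proof (rule lmeasurable_open)
      show "bounded (\<Union>(B ` C))" using UBC bounded_subset bounded_ball by blast
      show "open (\<Union>(B ` C))" by (auto simp: B_def)
    qed
    have "ennreal (e * measure lebesgue (\<Union>(B ` C))) < ennreal (e * \<epsilon>)"
      using lt UBCm e by (simp add: emeasure_eq_measure2 ennreal_mult)
    then have "e * measure lebesgue (\<Union>(B ` C)) < e * \<epsilon>"
      using e \<open>\<epsilon>>0\<close> by (subst (asm) ennreal_less_iff) auto
    then have m1: "measure lebesgue (\<Union>(B ` C)) \<le> \<epsilon>"
      using e by simp
    define T where "T = ((S \<inter> ball 0 (real n)) - \<Union>(B ` C)) \<union> \<Union>(B ` C)"
    have negT: "negligible ((S \<inter> ball 0 (real n)) - \<Union>(B ` C))" using neg by (simp add: B_def)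
    have negTm: "((S \<inter> ball 0 (real n)) - \<Union>(B ` C)) \<in> lmeasurable"
      using negT negligible_imp_measurable by blast
    have Tm: "T \<in> lmeasurable"
      unfolding T_def using negTm UBCm by (rule fmeasurable.Un)
    have "measure lebesgue T \<le> measure lebesgue ((S \<inter> ball 0 (real n)) - \<Union>(B ` C)) + measure lebesgue (\<Union>(B ` C))"
      unfolding T_def using negTm UBCm by (intro measure_Un_le) auto
    also have "\<dots> \<le> \<epsilon>" using negT m1 by (simp add: negligible_imp_measure0)
    finally show "\<exists>T. S \<inter> ball 0 (real n) \<subseteq> T \<and> T \<in> lmeasurable \<and> measure lebesgue T \<le> \<epsilon>"
      using Tm by (intro exI[of _ T]) (auto simp: T_def)
  qed
  then have "negligible (\<Union>n. S \<inter> ball 0 (real n))"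
    by (intro negligible_countable_Union) auto
  moreover have "S = (\<Union>n. S \<inter> ball 0 (real n))"
  proof (intro set_eqI iffI)
    fix x assume "x \<in> S"
    obtain n where "norm x < real n" using reals_Archimedean2 by blast
    then show "x \<in> (\<Union>n. S \<inter> ball 0 (real n))" using \<open>x\<in>S\<close> by auto
  qed auto
  ultimately show ?thesis by (simp add: S_def)
qed


lemma lebesgue_point_bound:
  fixes f :: "'a::euclidean_space \<Rightarrow> real" and L :: "'a set"
  assumes f: "f \<in> borel_measurable lebesgue" and f01: "\<And>z. 0 \<le> f z \<and> f z \<le> 1"
    and L: "L \<in> sets lebesgue" and c: "c \<ge> 0"
    and close: "\<And>p. p \<in> L \<Longrightarrow> \<bar>f p - a\<bar> \<le> c" and a01: "0 \<le> a" "a \<le> 1"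
  shows "(LINT p:ball z r|lebesgue. \<bar>f p - a\<bar>) \<le> c * measure lebesgue (ball z r) + measure lebesgue (ball z r - L)"
proof -
  have Bm: "ball z r \<in> sets lebesgue" by simp
  have "emeasure lborel (ball z r) < \<infinity>" by (intro emeasure_bounded_finite) simp
  then have Bf: "emeasure lebesgue (ball z r) < \<infinity>" by simp
  have int1: "integrable lebesgue (\<lambda>p. indicator (ball z r) p *\<^sub>R \<bar>f p - a\<bar>)"
  proof (rule integrableI_bounded_set_indicator[OF Bm _ Bf])
    show "(\<lambda>p. \<bar>f p - a\<bar>) \<in> borel_measurable lebesgue" using f by measurable
    show "AE x in lebesgue. x \<in> ball z r \<longrightarrow> norm \<bar>f x - a\<bar> \<le> 1"
    proof (intro AE_I2 impI)
      fix x show "norm \<bar>f x - a\<bar> \<le> 1" using f01[of x] a01 by (auto simp: abs_le_iff)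
    qed
  qed
  have int2: "integrable lebesgue (indicator (ball z r) :: 'a \<Rightarrow> real)"
    using Bm Bf by (simp add: integrable_indicator_iff)
  have BLm: "ball z r - L \<in> sets lebesgue" using L by auto
  have BLf: "emeasure lebesgue (ball z r - L) < \<infinity>"
    using Bf by (rule le_less_trans[rotated]) (intro emeasure_mono, auto)
  have int3: "integrable lebesgue (indicator (ball z r - L) :: 'a \<Rightarrow> real)"
    using BLm BLf by (simp add: integrable_indicator_iff)
  have "(LINT p:ball z r|lebesgue. \<bar>f p - a\<bar>) = (\<integral>p. indicator (ball z r) p *\<^sub>R \<bar>f p - a\<bar> \<partial>lebesgue)"
    by (simp add: set_lebesgue_integral_def)
  also have "\<dots> \<le> (\<integral>p. c * indicator (ball z r) p + indicator (ball z r - L) p \<partial>lebesgue)"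
  proof (rule integral_mono)
    show "integrable lebesgue (\<lambda>p. c * indicator (ball z r) p + indicator (ball z r - L) p :: real)"
      using int2 int3 by auto
    fix p
    show "indicator (ball z r) p *\<^sub>R \<bar>f p - a\<bar> \<le> c * indicator (ball z r) p + indicator (ball z r - L) p"
    proof (cases "p \<in> ball z r")
      case True
      show ?thesis
      proof (cases "p \<in> L")
        case True then show ?thesis using close[of p] \<open>p \<in> ball z r\<close> by simp
      next
        case False then show ?thesis using f01[of p] a01 c \<open>p \<in> ball z r\<close> by (simp add: abs_le_iff)
      qed
    qed simp
  qed (rule int1)
  also have "\<dots> = c * measure lebesgue (ball z r) + measure lebesgue (ball z r - L)"
    using int2 int3 by simp
  finally show ?thesis .
qed

lemma lebesgue_points_negligible:
  fixes f :: "'a::euclidean_space \<Rightarrow> real"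
  assumes f: "f \<in> borel_measurable lebesgue" and f01: "\<And>z. 0 \<le> f z \<and> f z \<le> 1"
  shows "negligible {z. \<not> (\<forall>\<delta>>0. eventually (\<lambda>r. (LINT p:ball z r|lebesgue. \<bar>f p - f z\<bar>)
             \<le> \<delta> * measure lebesgue (ball z r)) (at_right 0))}"
proof -
  define L where "L m k = {z. real k / real (Suc m) \<le> f z \<and> f z < (real k + 1) / real (Suc m)}" for m k :: nat
  note f[measurable]
  have Lm: "L m k \<in> sets lebesgue" for m k
    using measurable_sets[OF f, of "{real k / real (Suc m)..<(real k + 1) / real (Suc m)}"]
    by (simp add: L_def vimage_def)
  define D where "D m k j = {z \<in> L m k. \<forall>d>0. \<exists>r. 0<r \<and> r<d \<and>
            measure lebesgue (ball z r - L m k) > (1 / real (Suc j)) * measure lebesgue (ball z r)}" for m k j :: nat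
  have negD: "negligible (D m k j)" for m k j
    unfolding D_def by (rule density_bad_negligible[OF Lm]) simp
  have negU: "negligible (\<Union>m. \<Union>k. \<Union>j. D m k j)"
  proof -
    have 1: "negligible (\<Union>j. D m k j)" for m k
      using negD by (intro negligible_countable_Union) auto
    have 2: "negligible (\<Union>k. \<Union>j. D m k j)" for m
      using 1 by (intro negligible_countable_Union) auto
    show ?thesis using 2 by (intro negligible_countable_Union) auto
  qed
  have sub: "{z. \<not> (\<forall>\<delta>>0. eventually (\<lambda>r. (LINT p:ball z r|lebesgue. \<bar>f p - f z\<bar>)
             \<le> \<delta> * measure lebesgue (ball z r)) (at_right 0))} \<subseteq> (\<Union>m. \<Union>k. \<Union>j. D m k j)"
  proof (rule subsetI, rule ccontr)
    fix z assume z: "z \<in> {z. \<not> (\<forall>\<delta>>0. eventually (\<lambda>r. (LINT p:ball z r|lebesgue. \<bar>f p - f z\<bar>)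
             \<le> \<delta> * measure lebesgue (ball z r)) (at_right 0))}"
      and nz: "z \<notin> (\<Union>m. \<Union>k. \<Union>j. D m k j)"
    from z obtain \<delta> where \<delta>: "\<delta> > 0" and nev: "\<not> eventually (\<lambda>r. (LINT p:ball z r|lebesgue. \<bar>f p - f z\<bar>)
             \<le> \<delta> * measure lebesgue (ball z r)) (at_right 0)" by blast
    obtain m :: nat where m: "1 / real (Suc m) < \<delta> / 2"
      using \<delta> by (metis half_gt_zero_iff nat_approx_posE of_nat_Suc)
    define k where "k = nat \<lfloor>f z * real (Suc m)\<rfloor>"
    have fz: "0 \<le> f z" "f z \<le> 1" using f01 by auto
    have zL: "z \<in> L m k"
    proof -
      have "real k = of_int \<lfloor>f z * real (Suc m)\<rfloor>" using fz by (simp add: k_def)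
      then have "real k \<le> f z * real (Suc m)" "f z * real (Suc m) < real k + 1"
        by linarith+
      then show ?thesis unfolding L_def by (simp add: field_simps)
    qed
    have zD: "z \<notin> D m k m" using nz by blast
    then obtain d where d: "d > 0" and dd: "\<And>r. 0 < r \<Longrightarrow> r < d \<Longrightarrow>
        measure lebesgue (ball z r - L m k) \<le> (1 / real (Suc m)) * measure lebesgue (ball z r)"
    proof -
      have "\<not> (\<forall>d>0. \<exists>r. 0<r \<and> r<d \<and>
            measure lebesgue (ball z r - L m k) > (1 / real (Suc m)) * measure lebesgue (ball z r))"
        using zD zL unfolding D_def by blast
      then obtain d where "d > 0" "\<forall>r. \<not> (0<r \<and> r<d \<and>
            measure lebesgue (ball z r - L m k) > (1 / real (Suc m)) * measure lebesgue (ball z r))"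
        by blast
      then have *: "\<And>r. 0<r \<Longrightarrow> r<d \<Longrightarrow> \<not> measure lebesgue (ball z r - L m k) > (1 / real (Suc m)) * measure lebesgue (ball z r)"
        by blast
      show ?thesis
      proof (rule that[OF \<open>d > 0\<close>])
        fix r :: real assume "0 < r" "r < d"
        from *[OF this] show "measure lebesgue (ball z r - L m k) \<le> (1 / real (Suc m)) * measure lebesgue (ball z r)"
          by (simp only: not_less)
      qed
    qed
    have "eventually (\<lambda>r. (LINT p:ball z r|lebesgue. \<bar>f p - f z\<bar>)
             \<le> \<delta> * measure lebesgue (ball z r)) (at_right 0)"
      unfolding eventually_at_right_field
    proof (intro exI[of _ d] conjI allI impI)
      show "0 < d" by fact
      fix r :: real assume r: "0 < r" "r < d"
      have close: "\<bar>f p - f z\<bar> \<le> 1 / real (Suc m)" if "p \<in> L m k" for p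
      proof -
        have e: "(real k + 1)/real (Suc m) = real k/real (Suc m) + 1/real (Suc m)"
          by (simp add: add_divide_distrib)
        have "real k / real (Suc m) \<le> f p" "f p < (real k + 1) / real (Suc m)"
             "real k / real (Suc m) \<le> f z" "f z < (real k + 1) / real (Suc m)"
          using that zL unfolding L_def by auto
        then show ?thesis unfolding e by (simp add: abs_le_iff)
      qed
      have "(LINT p:ball z r|lebesgue. \<bar>f p - f z\<bar>) \<le> 1 / real (Suc m) * measure lebesgue (ball z r) + measure lebesgue (ball z r - L m k)"
        by (rule lebesgue_point_bound[OF f f01 Lm _ close]) (use fz in auto)
      also have "\<dots> \<le> 1 / real (Suc m) * measure lebesgue (ball z r) + 1 / real (Suc m) * measure lebesgue (ball z r)"
        using dd[of r] r by simp
      also have "\<dots> \<le> \<delta> * measure lebesgue (ball z r)"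
      proof -
        have "2 * (1 / real (Suc m)) \<le> \<delta>" using m by simp
        then have "(2 * (1 / real (Suc m))) * measure lebesgue (ball z r) \<le> \<delta> * measure lebesgue (ball z r)"
          by (intro mult_right_mono) auto
        then show ?thesis by simp
      qed
      finally show "(LINT p:ball z r|lebesgue. \<bar>f p - f z\<bar>) \<le> \<delta> * measure lebesgue (ball z r)" .
    qed
    with nev show False by blast
  qed
  show ?thesis using negligible_subset[OF negU sub] .
qed


fun csum :: "(real \<Rightarrow> 'a::real_normed_vector) \<Rightarrow> real list \<Rightarrow> real" where
  "csum f (x # y # zs) = norm (f y - f x) + csum f (y # zs)"
| "csum f _ = 0"

lemma csum_nonneg: "csum f ts \<ge> 0"
  by (induction f ts rule: csum.induct) auto

lemma csum_sum:
  "csum f ts = (\<Sum>i < length ts - 1. norm (f (ts ! (i + 1)) - f (ts ! i)))"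
proof (induction f ts rule: csum.induct)
  case (1 f x y zs)
  have e: "length (x # y # zs) - 1 = Suc (length (y # zs) - 1)" by simp
  show ?case
    unfolding e sum.lessThan_Suc_shift using 1 by simp
qed auto

lemma csum_ennreal:
  "ennreal (csum f ts) = (\<Sum>i < length ts - 1. ennreal (norm (f (ts ! (i + 1)) - f (ts ! i))))"
  unfolding csum_sum by (subst sum_ennreal) auto

lemma csum_le_variation:
  assumes "sorted ts" "set ts \<subseteq> S"
  shows "ennreal (csum f ts) \<le> variation S f"
  unfolding variation_def csum_ennreal using assms by (intro SUP_upper) auto

lemma csum_snoc: "csum f (xs @ [a]) \<ge> csum f xs"
proof (induction xs rule: induct_list012)
  case (3 x y zs) then show ?case by simp
qed (auto simp: csum_nonneg)

lemma csum_snoc2: "csum f (xs @ [a, b]) = csum f (xs @ [a]) + norm (f b - f a)"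
proof (induction xs rule: induct_list012)
  case (3 x y zs) then show ?case by simp
qed auto

lemma csum_app2: "csum f (xs @ [a, b]) \<ge> csum f xs + norm (f b - f a)"
  using csum_snoc2[of f xs a b] csum_snoc[of f xs a] by simp



lemma bv_cauchy:
  fixes \<gamma> :: "real \<Rightarrow> 'a::real_normed_vector"
  assumes bnd: "\<And>ts. sorted ts \<Longrightarrow> set ts \<subseteq> S \<Longrightarrow> csum \<gamma> ts \<le> V"
    and sS: "\<And>n. s n \<in> S" and lim: "s \<longlonglongrightarrow> t" and ev: "eventually (\<lambda>n. s n > t) sequentially"
  shows "Cauchy (\<lambda>n. \<gamma> (s n))"
proof (rule ccontr)
  assume "\<not> Cauchy (\<lambda>n. \<gamma> (s n))"
  then obtain \<epsilon> where \<epsilon>: "\<epsilon> > 0" and nc: "\<And>M. \<exists>m\<ge>M. \<exists>n\<ge>M. \<not> dist (\<gamma> (s m)) (\<gamma> (s n)) < \<epsilon>"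
    unfolding Cauchy_def by blast
  have claim: "\<forall>c>t. \<exists>ts. sorted ts \<and> set ts \<subseteq> S \<inter> {t<..<c} \<and> real k * \<epsilon> \<le> csum \<gamma> ts" for k :: nat
  proof (induction k)
    case 0 then show ?case by (intro allI impI exI[of _ "[]"]) auto
  next
    case (Suc k)
    show ?case
    proof (intro allI impI)
      fix c assume c: "c > t"
      have "eventually (\<lambda>n. s n < c) sequentially"
        using lim c by (simp add: order_tendstoD(2))
      with ev have "eventually (\<lambda>n. t < s n \<and> s n < c) sequentially" by (rule eventually_conj)
      then obtain N where N: "\<And>n. n \<ge> N \<Longrightarrow> t < s n \<and> s n < c" by (auto simp: eventually_sequentially)
      obtain m n where mn: "m \<ge> N" "n \<ge> N" "\<not> dist (\<gamma> (s m)) (\<gamma> (s n)) < \<epsilon>" using nc by blast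
      define lo where "lo = min (s m) (s n)"
      define hi where "hi = max (s m) (s n)"
      have lohi: "t < lo" "lo \<le> hi" "hi < c" using N[OF mn(1)] N[OF mn(2)] by (auto simp: lo_def hi_def)
      have dlh: "norm (\<gamma> hi - \<gamma> lo) \<ge> \<epsilon>"
        using mn(3) by (auto simp: lo_def hi_def dist_norm min_def max_def norm_minus_commute)
      obtain ts where ts: "sorted ts" "set ts \<subseteq> S \<inter> {t<..<lo}" "real k * \<epsilon> \<le> csum \<gamma> ts"
        using Suc lohi by blast
      have "sorted (ts @ [lo, hi])" using ts lohi by (auto simp: sorted_append)
      moreover have "set (ts @ [lo, hi]) \<subseteq> S \<inter> {t<..<c}"
        using ts lohi sS by (auto simp: lo_def hi_def min_def max_def)
      moreover have "real (Suc k) * \<epsilon> \<le> csum \<gamma> (ts @ [lo, hi])"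
      proof -
        have e: "real (Suc k) * \<epsilon> = real k * \<epsilon> + \<epsilon>" by (simp add: distrib_right)
        have "csum \<gamma> ts + norm (\<gamma> hi - \<gamma> lo) \<le> csum \<gamma> (ts @ [lo, hi])" by (rule csum_app2)
        then show ?thesis unfolding e using ts(3) dlh by linarith
      qed
      ultimately show "\<exists>ts. sorted ts \<and> set ts \<subseteq> S \<inter> {t<..<c} \<and> real (Suc k) * \<epsilon> \<le> csum \<gamma> ts"
        by blast
    qed
  qed
  obtain k :: nat where k: "real k > V / \<epsilon>" using reals_Archimedean2 by blast
  obtain ts where ts: "sorted ts" "set ts \<subseteq> S \<inter> {t<..<t+1}" "real k * \<epsilon> \<le> csum \<gamma> ts"
  proof -
    have "t + 1 > t" by simp
    then show ?thesis using claim[of k] that by blast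
  qed
  have "csum \<gamma> ts \<le> V" using bnd ts by auto
  then have "real k * \<epsilon> \<le> V" using ts by linarith
  then have "real k \<le> V / \<epsilon>" using \<epsilon> by (simp add: field_simps)
  then show False using k by linarith
qed



lemma bv_countable_jumps:
  fixes \<gamma> :: "real \<Rightarrow> 'a::real_normed_vector"
  assumes bnd: "\<And>ts. sorted ts \<Longrightarrow> set ts \<subseteq> {0..T} \<Longrightarrow> csum \<gamma> ts \<le> V"
    and lim: "\<And>t. t \<in> {0..<T} \<Longrightarrow> (\<lambda>n. s n t) \<longlonglongrightarrow> t"
    and ev: "\<And>t. t \<in> {0..<T} \<Longrightarrow> eventually (\<lambda>n. s n t > t) sequentially"
  shows "countable {t \<in> {0..<T}. \<not> ((\<lambda>n. \<gamma> (s n t)) \<longlonglongrightarrow> \<gamma> t)}"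
proof -
  define J where "J j = {t \<in> {0..<T}. frequently (\<lambda>n. norm (\<gamma> (s n t) - \<gamma> t) \<ge> 1 / real (Suc j)) sequentially}" for j
  have finJ: "finite (J j)" for j
  proof (rule ccontr)
    assume inf: "infinite (J j)"
    define \<epsilon> where "\<epsilon> = 1 / real (Suc j)"
    have \<epsilon>: "\<epsilon> > 0" by (simp add: \<epsilon>_def)
    have claim: "F \<subseteq> J j \<longrightarrow> (\<forall>b. b \<le> T \<longrightarrow> (\<forall>x\<in>F. x < b) \<longrightarrow>
        (\<exists>ts. sorted ts \<and> set ts \<subseteq> {0..<b} \<and> real (card F) * \<epsilon> \<le> csum \<gamma> ts))"
      if "finite F" for F
      using that
    proof (induction F rule: finite_linorder_max_induct)
      case empty then show ?case by (intro impI allI exI[of _ "[]"]) auto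
    next
      case (insert b0 A)
      show ?case
      proof (intro impI allI)
        fix b assume sub: "insert b0 A \<subseteq> J j" and b: "b \<le> T" and lt: "\<forall>x\<in>insert b0 A. x < b"
        have b0J: "b0 \<in> J j" using sub by blast
        then have b0: "b0 \<in> {0..<T}" and fr: "frequently (\<lambda>n. norm (\<gamma> (s n b0) - \<gamma> b0) \<ge> \<epsilon>) sequentially"
          by (auto simp: J_def \<epsilon>_def)
        have "b0 < b" using lt by blast
        have "eventually (\<lambda>n. s n b0 < b) sequentially"
          using lim[OF b0] \<open>b0 < b\<close> by (simp add: order_tendstoD(2))
        with ev[OF b0] have "eventually (\<lambda>n. b0 < s n b0 \<and> s n b0 < b) sequentially" by (rule eventually_conj)
        from frequently_eventually_frequently[OF fr this]
        obtain n where n: "norm (\<gamma> (s n b0) - \<gamma> b0) \<ge> \<epsilon>" "b0 < s n b0" "s n b0 < b"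
          by (metis (mono_tags, lifting) frequently_ex)
        have "A \<subseteq> J j" using sub by blast
        moreover have "b0 \<le> T" using b0 by simp
        ultimately obtain ts where ts: "sorted ts" "set ts \<subseteq> {0..<b0}" "real (card A) * \<epsilon> \<le> csum \<gamma> ts"
          using insert.IH insert.hyps by blast
        have "sorted (ts @ [b0, s n b0])" using ts n by (auto simp: sorted_append)
        moreover have "set (ts @ [b0, s n b0]) \<subseteq> {0..<b}" using ts n b0 \<open>b0 < b\<close> by auto
        moreover have "real (card (insert b0 A)) * \<epsilon> \<le> csum \<gamma> (ts @ [b0, s n b0])"
        proof -
          have "b0 \<notin> A" using insert.hyps by auto
          then have "card (insert b0 A) = Suc (card A)" using insert.hyps by simp
          then have e: "real (card (insert b0 A)) * \<epsilon> = real (card A) * \<epsilon> + \<epsilon>" by (simp add: distrib_right)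
          have "csum \<gamma> ts + norm (\<gamma> (s n b0) - \<gamma> b0) \<le> csum \<gamma> (ts @ [b0, s n b0])" by (rule csum_app2)
          then show ?thesis unfolding e using ts(3) n(1) by linarith
        qed
        ultimately show "\<exists>ts. sorted ts \<and> set ts \<subseteq> {0..<b} \<and> real (card (insert b0 A)) * \<epsilon> \<le> csum \<gamma> ts"
          by blast
      qed
    qed
    obtain k :: nat where k: "real k > V / \<epsilon>" using reals_Archimedean2 by blast
    obtain F where F: "finite F" "card F = k" "F \<subseteq> J j" using infinite_arbitrarily_large[OF inf] by blast
    have "\<forall>x\<in>F. x < T" using F by (auto simp: J_def)
    then obtain ts where ts: "sorted ts" "set ts \<subseteq> {0..<T}" "real k * \<epsilon> \<le> csum \<gamma> ts"
      using claim[OF F(1)] F by auto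
    have "set ts \<subseteq> {0..T}" using ts(2) by auto
    then have "csum \<gamma> ts \<le> V" using bnd ts(1) by blast
    then have "real k * \<epsilon> \<le> V" using ts by linarith
    then have "real k \<le> V / \<epsilon>" using \<epsilon> by (simp add: field_simps)
    then show False using k by linarith
  qed
  have "{t \<in> {0..<T}. \<not> ((\<lambda>n. \<gamma> (s n t)) \<longlonglongrightarrow> \<gamma> t)} \<subseteq> (\<Union>j. J j)"
  proof
    fix t assume t: "t \<in> {t \<in> {0..<T}. \<not> ((\<lambda>n. \<gamma> (s n t)) \<longlonglongrightarrow> \<gamma> t)}"
    then obtain e where e: "e > 0" and ne: "\<not> eventually (\<lambda>n. dist (\<gamma> (s n t)) (\<gamma> t) < e) sequentially"
      unfolding tendsto_iff by auto
    obtain j where j: "1 / real (Suc j) < e" using e by (metis nat_approx_posE of_nat_Suc)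
    have "frequently (\<lambda>n. norm (\<gamma> (s n t) - \<gamma> t) \<ge> 1 / real (Suc j)) sequentially"
    proof (rule frequently_elim1[OF ne[unfolded not_eventually]])
      fix n assume "\<not> dist (\<gamma> (s n t)) (\<gamma> t) < e"
      then show "norm (\<gamma> (s n t) - \<gamma> t) \<ge> 1 / real (Suc j)" using j by (simp add: dist_norm)
    qed
    then show "t \<in> (\<Union>j. J j)" using t by (auto simp: J_def)
  qed
  moreover have "countable (\<Union>j. J j)" using finJ by (intro countable_UN) (auto intro: countable_finite)
  ultimately show ?thesis by (rule countable_subset)
qed


definition dyc :: "nat \<Rightarrow> real \<Rightarrow> real" where
  "dyc n t = (of_int \<lfloor>2^n * t\<rfloor> + 1) / 2^n"

definition dyad :: "real \<Rightarrow> nat \<Rightarrow> real \<Rightarrow> real" where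
  "dyad T n t = (if 0 \<le> dyc n t \<and> dyc n t < T then dyc n t else 0)"

lemma dyc_bounds: "t < dyc n t" "dyc n t \<le> t + 1 / 2^n"
proof -
  have p: "(0::real) < 2^n" by simp
  have a: "2^n * t < of_int \<lfloor>2^n * t\<rfloor> + 1" "of_int \<lfloor>2^n * t\<rfloor> \<le> 2^n * t" by linarith+
  show "t < dyc n t" unfolding dyc_def using a p by (simp add: field_simps)
  show "dyc n t \<le> t + 1 / 2^n" unfolding dyc_def using a p by (simp add: field_simps)
qed

lemma dyc_tendsto: "(\<lambda>n. dyc n t) \<longlonglongrightarrow> t"
proof (rule tendsto_sandwich[of "\<lambda>n. t" _ _ "\<lambda>n. t + 1 / 2^n"])
  show "\<forall>\<^sub>F n in sequentially. t \<le> dyc n t" using dyc_bounds(1) by (simp add: less_imp_le)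
  show "\<forall>\<^sub>F n in sequentially. dyc n t \<le> t + 1 / 2^n" using dyc_bounds(2) by simp
  show "(\<lambda>n. t) \<longlonglongrightarrow> t" by simp
  have "(\<lambda>n. 1 / (2::real)^n) \<longlonglongrightarrow> 0"
    by (rule LIMSEQ_divide_realpow_zero) simp
  then have "(\<lambda>n. t + 1 / 2^n) \<longlonglongrightarrow> t + 0" by (intro tendsto_add tendsto_const)
  then show "(\<lambda>n. t + 1 / 2^n) \<longlonglongrightarrow> t" by simp
qed

lemma dyad_range: "T > 0 \<Longrightarrow> dyad T n t \<in> {0..<T}"
  by (auto simp: dyad_def)

lemma dyad_inside:
  assumes t: "t \<in> {0..<T}"
  shows "eventually (\<lambda>n. dyad T n t = dyc n t) sequentially"
proof -
  have "eventually (\<lambda>n. dyc n t < T) sequentially"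
    using dyc_tendsto t by (intro order_tendstoD(2)) auto
  then show ?thesis
  proof eventually_elim
    case (elim n)
    have "t < dyc n t" by (rule dyc_bounds)
    then show ?case using elim t by (simp add: dyad_def)
  qed
qed

lemma dyad_tendsto: "t \<in> {0..<T} \<Longrightarrow> (\<lambda>n. dyad T n t) \<longlonglongrightarrow> t"
  using dyc_tendsto[of t] dyad_inside[of t T] by (simp add: tendsto_cong)

lemma dyad_gt: assumes t: "t \<in> {0..<T}" shows "eventually (\<lambda>n. dyad T n t > t) sequentially"
  using dyad_inside[OF t] by eventually_elim (simp add: dyc_bounds)

lemma dyad_outside:
  assumes t: "t \<notin> {0..<T}"
  shows "eventually (\<lambda>n. dyad T n t = 0) sequentially"
proof (cases "t < 0")
  case True
  have "eventually (\<lambda>n. dyc n t < 0) sequentially"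
    using dyc_tendsto True by (intro order_tendstoD(2)) auto
  then show ?thesis by eventually_elim (auto simp: dyad_def)
next
  case False
  then have "t \<ge> T" using t by auto
  have "dyad T n t = 0" for n
  proof -
    have "t < dyc n t" by (rule dyc_bounds)
    then show ?thesis using \<open>t \<ge> T\<close> by (simp add: dyad_def)
  qed
  then show ?thesis by simp
qed

lemma dyad_meas[measurable]: "dyad T n \<in> borel_measurable borel"
  unfolding dyad_def dyc_def by measurable

lemma dyad_countable: "countable (range (dyad T n))"
proof -
  have "range (dyad T n) \<subseteq> insert 0 ((\<lambda>k::int. (of_int k + 1) / 2^n) ` UNIV)"
    by (auto simp: dyad_def dyc_def)
  then show ?thesis by (rule countable_subset) auto
qed

lemma joint_meas_dyad:
  fixes \<omega> :: "(real \<Rightarrow> real \<times> real) measure"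
  assumes T: "T > 0" and ev: "\<And>c. c \<in> {0..<T} \<Longrightarrow> (\<lambda>\<gamma>. \<gamma> c) \<in> measurable \<omega> lborel"
  shows "(\<lambda>p. fst p (dyad T n (snd p))) \<in> borel_measurable (\<omega> \<Otimes>\<^sub>M lborel)"
proof -
  let ?I = "range (dyad T n)"
  have g: "(\<lambda>p. dyad T n (snd p)) \<in> measurable (\<omega> \<Otimes>\<^sub>M lborel) (count_space ?I)"
    unfolding measurable_count_space_eq_countable[OF dyad_countable]
  proof (intro conjI ballI)
    show "(\<lambda>p. dyad T n (snd p)) \<in> space (\<omega> \<Otimes>\<^sub>M lborel) \<rightarrow> ?I" by auto
    fix a
    have "{p \<in> space (\<omega> \<Otimes>\<^sub>M lborel). dyad T n (snd p) = a} \<in> sets (\<omega> \<Otimes>\<^sub>M lborel)"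
      by measurable
    moreover have "(\<lambda>p. dyad T n (snd p)) -` {a} \<inter> space (\<omega> \<Otimes>\<^sub>M lborel)
        = {p \<in> space (\<omega> \<Otimes>\<^sub>M lborel). dyad T n (snd p) = a}" by auto
    ultimately show "(\<lambda>p. dyad T n (snd p)) -` {a} \<inter> space (\<omega> \<Otimes>\<^sub>M lborel) \<in> sets (\<omega> \<Otimes>\<^sub>M lborel)"
      by simp
  qed
  have f: "(\<lambda>p. fst p i) \<in> borel_measurable (\<omega> \<Otimes>\<^sub>M lborel)" if "i \<in> ?I" for i
  proof -
    have "i \<in> {0..<T}" using that dyad_range[OF T] by auto
    then have "(\<lambda>\<gamma>. \<gamma> i) \<in> borel_measurable \<omega>" using ev by simp
    then show ?thesis by (rule measurable_compose[OF measurable_fst])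
  qed
  show ?thesis
    by (rule measurable_compose_countable'[where f="\<lambda>i p. fst p i", OF f g dyad_countable])
qed

lemma curve_bnd:
  assumes "\<gamma> \<in> Curves T"
  obtains V where "\<And>ts. sorted ts \<Longrightarrow> set ts \<subseteq> {0..T} \<Longrightarrow> csum \<gamma> ts \<le> V"
proof -
  have v: "variation {0..T} \<gamma> < \<infinity>" using assms by (simp add: Curves_def)
  have "csum \<gamma> ts \<le> enn2real (variation {0..T} \<gamma>)" if "sorted ts" "set ts \<subseteq> {0..T}" for ts
  proof -
    have "ennreal (csum \<gamma> ts) \<le> variation {0..T} \<gamma>" by (rule csum_le_variation[OF that])
    then have "enn2real (ennreal (csum \<gamma> ts)) \<le> enn2real (variation {0..T} \<gamma>)"
      using v by (intro enn2real_mono) auto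
    then show ?thesis using csum_nonneg[of \<gamma> ts] by simp
  qed
  then show ?thesis using that by blast
qed

lemma curve_convergent:
  assumes "\<gamma> \<in> Curves T"
  shows "convergent (\<lambda>n. \<gamma> (dyad T n t))"
proof (cases "t \<in> {0..<T}")
  case True
  obtain V where V: "\<And>ts. sorted ts \<Longrightarrow> set ts \<subseteq> {0..T} \<Longrightarrow> csum \<gamma> ts \<le> V"
    using curve_bnd[OF assms] by blast
  have "T > 0" using True by auto
  have r: "dyad T n t \<in> {0..T}" for n using dyad_range[OF \<open>T>0\<close>, of n t] by auto
  have "Cauchy (\<lambda>n. \<gamma> (dyad T n t))"
    by (rule bv_cauchy[OF V r dyad_tendsto[OF True] dyad_gt[OF True]])
  then show ?thesis by (simp add: Cauchy_convergent_iff)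
next
  case False
  have "eventually (\<lambda>n. \<gamma> (dyad T n t) = \<gamma> 0) sequentially"
    using dyad_outside[OF False] by eventually_elim simp
  then have "(\<lambda>n. \<gamma> (dyad T n t)) \<longlonglongrightarrow> \<gamma> 0" by (simp add: tendsto_eventually)
  then show ?thesis by (rule convergentI)
qed

definition Glim :: "real \<Rightarrow> (real \<Rightarrow> real \<times> real) \<Rightarrow> real \<Rightarrow> real \<times> real" where
  "Glim T \<gamma> t = lim (\<lambda>n. \<gamma> (dyad T n t))"

lemma Glim_tendsto: "\<gamma> \<in> Curves T \<Longrightarrow> (\<lambda>n. \<gamma> (dyad T n t)) \<longlonglongrightarrow> Glim T \<gamma> t"
  unfolding Glim_def using curve_convergent convergent_LIMSEQ_iff by blast

lemma Glim_meas:
  fixes \<omega> :: "(real \<Rightarrow> real \<times> real) measure"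
  assumes T: "T > 0" and ev: "\<And>c. c \<in> {0..<T} \<Longrightarrow> (\<lambda>\<gamma>. \<gamma> c) \<in> measurable \<omega> lborel"
    and sp: "space \<omega> = Curves T"
  shows "(\<lambda>p. Glim T (fst p) (snd p)) \<in> borel_measurable (\<omega> \<Otimes>\<^sub>M lborel)"
proof (rule borel_measurable_LIMSEQ_metric[where f="\<lambda>n p. fst p (dyad T n (snd p))"])
  fix n
  show "(\<lambda>p. fst p (dyad T n (snd p))) \<in> borel_measurable (\<omega> \<Otimes>\<^sub>M lborel)"
    using joint_meas_dyad[OF T ev, of n] by blast
next
  fix p :: "(real \<Rightarrow> real \<times> real) \<times> real" assume "p \<in> space (\<omega> \<Otimes>\<^sub>M lborel)"
  then have "fst p \<in> space \<omega>" by (simp add: space_pair_measure mem_Times_iff)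
  then have "fst p \<in> Curves T" using sp by simp
  then show "(\<lambda>n. fst p (dyad T n (snd p))) \<longlonglongrightarrow> Glim T (fst p) (snd p)" by (rule Glim_tendsto)
qed

lemma Glim_eq_ae:
  assumes "\<gamma> \<in> Curves T"
  shows "AE t in lborel. t \<in> {0..<T} \<longrightarrow> Glim T \<gamma> t = \<gamma> t"
proof -
  obtain V where V: "\<And>ts. sorted ts \<Longrightarrow> set ts \<subseteq> {0..T} \<Longrightarrow> csum \<gamma> ts \<le> V"
    using curve_bnd[OF assms] by blast
  have cnt: "countable {t \<in> {0..<T}. \<not> ((\<lambda>n. \<gamma> (dyad T n t)) \<longlonglongrightarrow> \<gamma> t)}"
    by (rule bv_countable_jumps[OF V dyad_tendsto dyad_gt])
  have "AE t in lborel. t \<notin> {t \<in> {0..<T}. \<not> ((\<lambda>n. \<gamma> (dyad T n t)) \<longlonglongrightarrow> \<gamma> t)}"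
    using cnt by (intro AE_not_in countable_imp_null_set_lborel)
  then show ?thesis
  proof eventually_elim
    case (elim t)
    show ?case
    proof
      assume "t \<in> {0..<T}"
      then have "(\<lambda>n. \<gamma> (dyad T n t)) \<longlonglongrightarrow> \<gamma> t" using elim by auto
      with Glim_tendsto[OF assms] show "Glim T \<gamma> t = \<gamma> t" using LIMSEQ_unique by blast
    qed
  qed
qed


lemma approx_open:
  fixes A Et :: "(real \<times> real) set"
  assumes A: "A \<in> sets lebesgue" and Et: "Et \<in> sets lebesgue" and z: "emeasure lebesgue (A \<inter> Et) = 0"
    and e: "e > 0"
  shows "\<exists>U. open U \<and> A \<subseteq> U \<and> emeasure lebesgue (U \<inter> Et) < ennreal e"
proof -
  have AE: "A \<inter> Et \<in> sets lebesgue" using A Et by auto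
  obtain U1 where U1: "open U1" "A \<inter> Et \<subseteq> U1" "(U1 - A \<inter> Et) \<in> lmeasurable"
      "emeasure lebesgue (U1 - A \<inter> Et) < ennreal (e/2)"
    using sets_lebesgue_outer_open[OF AE, of "e/2"] e by auto
  have CE: "UNIV - Et \<in> sets lebesgue" using Et by auto
  obtain U2 where U2: "open U2" "UNIV - Et \<subseteq> U2" "(U2 - (UNIV - Et)) \<in> lmeasurable"
      "emeasure lebesgue (U2 - (UNIV - Et)) < ennreal (e/2)"
    using sets_lebesgue_outer_open[OF CE, of "e/2"] e by auto
  have U1m: "U1 \<in> sets lebesgue" using U1(1) by auto
  have U2m: "U2 \<in> sets lebesgue" using U2(1) by auto
  have "emeasure lebesgue U1 \<le> emeasure lebesgue ((U1 - A \<inter> Et) \<union> (A \<inter> Et))"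
    by (intro emeasure_mono) (use U1 AE in auto)
  also have "\<dots> \<le> emeasure lebesgue (U1 - A \<inter> Et) + emeasure lebesgue (A \<inter> Et)"
    by (intro emeasure_subadditive) (use U1 AE in auto)
  also have "\<dots> < ennreal (e/2)" using U1(4) z by simp
  finally have m1: "emeasure lebesgue U1 < ennreal (e/2)" .
  have eq2: "U2 - (UNIV - Et) = U2 \<inter> Et" by auto
  have "emeasure lebesgue ((U1 \<union> U2) \<inter> Et) \<le> emeasure lebesgue (U1 \<union> (U2 \<inter> Et))"
    by (intro emeasure_mono) (use U1m U2m Et in auto)
  also have "\<dots> \<le> emeasure lebesgue U1 + emeasure lebesgue (U2 \<inter> Et)"
    by (intro emeasure_subadditive) (use U1m U2m Et in auto)
  also have "\<dots> < ennreal (e/2) + ennreal (e/2)"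
    using m1 U2(4) unfolding eq2 by (intro add_strict_mono) auto
  also have "\<dots> = ennreal e" using e by (simp flip: ennreal_plus)
  finally have "emeasure lebesgue ((U1 \<union> U2) \<inter> Et) < ennreal e" .
  moreover have "A \<subseteq> U1 \<union> U2" using U1(2) U2(2) by auto
  moreover have "open (U1 \<union> U2)" using U1(1) U2(1) by auto
  ultimately show ?thesis by blast
qed


locale LS =
  fixes T :: real and \<omega> :: "(real \<Rightarrow> real \<times> real) measure" and E :: "real \<Rightarrow> (real \<times> real) set"
  assumes T: "T > 0"
    and sp: "space \<omega> = Curves T"
    and ev: "\<And>c. c \<in> {0..<T} \<Longrightarrow> (\<lambda>\<gamma>. \<gamma> c) \<in> measurable \<omega> lborel"
    and marg: "\<And>c A. c \<in> {0..<T} \<Longrightarrow> A \<in> sets lborel \<Longrightarrow>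
                 emeasure (distr \<omega> lborel (\<lambda>\<gamma>. \<gamma> c)) A = emeasure lebesgue (A \<inter> E c)"
    and Em: "\<And>c. c \<in> {0..<T} \<Longrightarrow> E c \<in> sets lebesgue"
    and Econt: "\<And>t. t \<in> {0..<T} \<Longrightarrow> ((\<lambda>s. emeasure lebesgue (E s - E t)) \<longlongrightarrow> 0) (at t within {0..<T})"
begin

lemma marg':
  assumes c: "c \<in> {0..<T}" and A: "A \<in> sets borel"
  shows "emeasure \<omega> {\<gamma> \<in> space \<omega>. \<gamma> c \<in> A} = emeasure lebesgue (A \<inter> E c)"
proof -
  have "emeasure \<omega> {\<gamma> \<in> space \<omega>. \<gamma> c \<in> A} = emeasure \<omega> ((\<lambda>\<gamma>. \<gamma> c) -` A \<inter> space \<omega>)"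
    by (simp add: vimage_def Int_def conj_commute)
  also have "\<dots> = emeasure (distr \<omega> lborel (\<lambda>\<gamma>. \<gamma> c)) A"
    using A ev[OF c] by (subst emeasure_distr) auto
  also have "\<dots> = emeasure lebesgue (A \<inter> E c)" using marg[OF c] A by simp
  finally show ?thesis .
qed

lemma sigma_finite: "sigma_finite_measure \<omega>"
proof
  define A where "A = range (\<lambda>n::nat. {\<gamma> \<in> space \<omega>. \<gamma> 0 \<in> ball 0 (real n)})"
  have c0: "(0::real) \<in> {0..<T}" using T by simp
  have ev0[measurable]: "(\<lambda>\<gamma>. \<gamma> 0) \<in> borel_measurable \<omega>" using ev[OF c0] by simp
  have "countable A" by (simp add: A_def)
  moreover have "A \<subseteq> sets \<omega>" by (auto simp: A_def)
  moreover have "\<Union>A = space \<omega>"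
  proof (intro set_eqI iffI)
    fix \<gamma> assume "\<gamma> \<in> space \<omega>"
    obtain n where "norm (\<gamma> 0) < real n" using reals_Archimedean2 by blast
    then show "\<gamma> \<in> \<Union>A" using \<open>\<gamma> \<in> space \<omega>\<close> by (auto simp: A_def)
  qed (auto simp: A_def)
  moreover have "emeasure \<omega> a \<noteq> \<infinity>" if aA: "a \<in> A" for a
  proof -
    obtain n :: nat where a: "a = {\<gamma> \<in> space \<omega>. \<gamma> 0 \<in> ball 0 (real n)}" using aA unfolding A_def by blast
    have "emeasure \<omega> a = emeasure lebesgue (ball 0 (real n) \<inter> E 0)"
      unfolding a by (rule marg'[OF c0]) auto
    also have "\<dots> \<le> emeasure lebesgue (ball (0::real\<times>real) (real n))"
      using Em[OF c0] by (intro emeasure_mono) auto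
    also have "\<dots> < \<infinity>"
    proof -
      have "emeasure lborel (ball (0::real\<times>real) (real n)) < \<infinity>" by (intro emeasure_bounded_finite) simp
      then show ?thesis by simp
    qed
    finally show ?thesis by simp
  qed
  ultimately show "\<exists>A. countable A \<and> A \<subseteq> sets \<omega> \<and> \<Union> A = space \<omega> \<and> (\<forall>a\<in>A. emeasure \<omega> a \<noteq> \<infinity>)"
    by (intro exI[of _ A]) simp
qed

lemma Gt_meas: "(\<lambda>\<gamma>. Glim T \<gamma> t) \<in> borel_measurable \<omega>"
proof -
  have "(\<lambda>\<gamma>. (\<gamma>, t)) \<in> measurable \<omega> (\<omega> \<Otimes>\<^sub>M lborel)"
    by (intro measurable_Pair measurable_ident_sets measurable_const) auto
  from measurable_compose[OF this Glim_meas[OF T ev sp]] show ?thesis by simp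
qed

lemma open_bound:
  assumes t: "t \<in> {0..<T}" and U: "open U"
  shows "emeasure \<omega> {\<gamma> \<in> space \<omega>. Glim T \<gamma> t \<in> U} \<le> emeasure lebesgue (U \<inter> E t)"
proof -
  define s where "s n = dyad T n t" for n
  have s0T: "s n \<in> {0..<T}" for n unfolding s_def by (rule dyad_range[OF T])
  have Ub: "U \<in> sets borel" using U by auto
  note Ub[measurable]
  have Gmeas[measurable]: "(\<lambda>\<gamma>. Glim T \<gamma> t) \<in> borel_measurable \<omega>" by (rule Gt_meas)
  have evs[measurable]: "(\<lambda>\<gamma>. \<gamma> (s n)) \<in> borel_measurable \<omega>" for n using ev[OF s0T[of n]] by simp
  have Gm: "{\<gamma> \<in> space \<omega>. Glim T \<gamma> t \<in> U} \<in> sets \<omega>" by measurable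
  have ind: "indicator U (Glim T \<gamma> t) \<le> liminf (\<lambda>n. indicator U (\<gamma> (s n)) :: ennreal)"
    if "\<gamma> \<in> space \<omega>" for \<gamma>
  proof (cases "Glim T \<gamma> t \<in> U")
    case True
    have "\<gamma> \<in> Curves T" using that sp by simp
    then have "(\<lambda>n. \<gamma> (s n)) \<longlonglongrightarrow> Glim T \<gamma> t" unfolding s_def by (rule Glim_tendsto)
    then have "eventually (\<lambda>n. \<gamma> (s n) \<in> U) sequentially"
      using U True by (rule topological_tendstoD)
    then have "eventually (\<lambda>n. (1::ennreal) \<le> indicator U (\<gamma> (s n))) sequentially"
      by eventually_elim simp
    then have "1 \<le> liminf (\<lambda>n. indicator U (\<gamma> (s n)) :: ennreal)" by (rule Liminf_bounded)
    then show ?thesis using True by simp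
  qed simp
  have "emeasure \<omega> {\<gamma> \<in> space \<omega>. Glim T \<gamma> t \<in> U} = (\<integral>\<^sup>+\<gamma>. indicator {\<gamma> \<in> space \<omega>. Glim T \<gamma> t \<in> U} \<gamma> \<partial>\<omega>)"
    using Gm by simp
  also have "\<dots> = (\<integral>\<^sup>+\<gamma>. indicator U (Glim T \<gamma> t) \<partial>\<omega>)"
    by (intro nn_integral_cong) (simp add: indicator_def)
  also have "\<dots> \<le> (\<integral>\<^sup>+\<gamma>. liminf (\<lambda>n. indicator U (\<gamma> (s n)) :: ennreal) \<partial>\<omega>)"
    by (intro nn_integral_mono ind)
  also have "\<dots> \<le> liminf (\<lambda>n. (\<integral>\<^sup>+\<gamma>. indicator U (\<gamma> (s n)) \<partial>\<omega>))"
    by (intro nn_integral_liminf) measurable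
  also have "\<dots> = liminf (\<lambda>n. emeasure lebesgue (U \<inter> E (s n)))"
  proof -
    have "(\<integral>\<^sup>+\<gamma>. indicator U (\<gamma> (s n)) \<partial>\<omega>) = emeasure lebesgue (U \<inter> E (s n))" for n
    proof -
      have m: "{\<gamma> \<in> space \<omega>. \<gamma> (s n) \<in> U} \<in> sets \<omega>" by measurable
      have "(\<integral>\<^sup>+\<gamma>. indicator U (\<gamma> (s n)) \<partial>\<omega>) = (\<integral>\<^sup>+\<gamma>. indicator {\<gamma> \<in> space \<omega>. \<gamma> (s n) \<in> U} \<gamma> \<partial>\<omega>)"
        by (intro nn_integral_cong) (simp add: indicator_def)
      also have "\<dots> = emeasure \<omega> {\<gamma> \<in> space \<omega>. \<gamma> (s n) \<in> U}" using m by simp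
      also have "\<dots> = emeasure lebesgue (U \<inter> E (s n))" by (rule marg'[OF s0T Ub])
      finally show ?thesis .
    qed
    then show ?thesis by simp
  qed
  also have "\<dots> \<le> emeasure lebesgue (U \<inter> E t)"
  proof -
    define c where "c = emeasure lebesgue (U \<inter> E t)"
    have fl: "filterlim s (at t within {0..<T}) sequentially"
      unfolding filterlim_at
    proof
      show "\<forall>\<^sub>F n in sequentially. s n \<in> {0..<T} \<and> s n \<noteq> t"
        using dyad_gt[OF t] s0T unfolding s_def by (auto elim!: eventually_mono)
      show "s \<longlonglongrightarrow> t" unfolding s_def using dyad_tendsto[OF t] by simp
    qed
    have b: "(\<lambda>n. emeasure lebesgue (E (s n) - E t)) \<longlonglongrightarrow> 0"
      using filterlim_compose[OF Econt[OF t] fl] by simp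
    have cb: "(\<lambda>n. c + emeasure lebesgue (E (s n) - E t)) \<longlonglongrightarrow> c + 0"
      by (intro tendsto_add tendsto_const b)
    have le: "emeasure lebesgue (U \<inter> E (s n)) \<le> c + emeasure lebesgue (E (s n) - E t)" for n
    proof -
      have m1: "E (s n) \<in> sets lebesgue" "E t \<in> sets lebesgue" "U \<in> sets lebesgue" using Em s0T t U by auto
      have "emeasure lebesgue (U \<inter> E (s n)) \<le> emeasure lebesgue ((U \<inter> E t) \<union> (E (s n) - E t))"
        by (intro emeasure_mono sets.Un sets.Int sets.Diff m1) auto
      also have "\<dots> \<le> c + emeasure lebesgue (E (s n) - E t)"
        unfolding c_def using m1 Ub by (intro emeasure_subadditive) auto
      finally show ?thesis .
    qed
    have "liminf (\<lambda>n. emeasure lebesgue (U \<inter> E (s n))) \<le> liminf (\<lambda>n. c + emeasure lebesgue (E (s n) - E t))"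
      using le by (intro Liminf_mono) auto
    also have "\<dots> = c" using lim_imp_Liminf[OF _ cb] by simp
    finally show ?thesis unfolding c_def .
  qed
  finally show ?thesis .
qed

lemma null_bound:
  assumes t: "t \<in> {0..<T}"
    and appr: "\<And>e. e > 0 \<Longrightarrow> \<exists>U. open U \<and> A \<subseteq> U \<and> emeasure lebesgue (U \<inter> E t) < ennreal e"
  shows "AE \<gamma> in \<omega>. Glim T \<gamma> t \<notin> A"
proof -
  have "\<forall>k::nat. \<exists>U. open U \<and> A \<subseteq> U \<and> emeasure lebesgue (U \<inter> E t) < ennreal (1 / real (Suc k))"
    using appr by simp
  then obtain U where U: "\<And>k. open (U k)" "\<And>k. A \<subseteq> U k"
      "\<And>k. emeasure lebesgue (U k \<inter> E t) < ennreal (1 / real (Suc k))"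
    by metis
  have Gmeas[measurable]: "(\<lambda>\<gamma>. Glim T \<gamma> t) \<in> borel_measurable \<omega>" by (rule Gt_meas)
  have Ub[measurable]: "U k \<in> sets borel" for k using U(1) by auto
  define N where "N = {\<gamma> \<in> space \<omega>. \<forall>k. Glim T \<gamma> t \<in> U k}"
  have Nm: "N \<in> sets \<omega>" unfolding N_def by measurable
  have Nk: "emeasure \<omega> N \<le> ennreal (1 / real (Suc k))" for k
  proof -
    have "emeasure \<omega> N \<le> emeasure \<omega> {\<gamma> \<in> space \<omega>. Glim T \<gamma> t \<in> U k}"
      by (intro emeasure_mono) (auto simp: N_def)
    also have "\<dots> \<le> emeasure lebesgue (U k \<inter> E t)" by (rule open_bound[OF t U(1)])
    also have "\<dots> \<le> ennreal (1 / real (Suc k))" using U(3)[of k] by simp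
    finally show ?thesis .
  qed
  have "emeasure \<omega> N \<le> 0"
  proof (rule ennreal_le_epsilon)
    fix e :: real assume e: "0 < e"
    obtain k :: nat where k: "1 / real (Suc k) < e" using e by (metis nat_approx_posE of_nat_Suc)
    have "emeasure \<omega> N \<le> ennreal (1 / real (Suc k))" by (rule Nk)
    also have "\<dots> \<le> ennreal e" using k by (intro ennreal_leI) linarith
    finally show "emeasure \<omega> N \<le> 0 + ennreal e" by simp
  qed
  then have "N \<in> null_sets \<omega>" using Nm by auto
  moreover have "{\<gamma> \<in> space \<omega>. \<not> Glim T \<gamma> t \<notin> A} \<subseteq> N" using U(2) by (auto simp: N_def)
  ultimately show ?thesis by (rule AE_I')
qed

lemma main_generic:
  fixes B :: "(real \<times> (real \<times> real)) set"
  assumes Bm: "B \<in> sets borel"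
    and Bnull: "AE t in lborel. t \<in> {0..<T} \<longrightarrow> emeasure lebesgue ({p. (t,p) \<in> B} \<inter> E t) = 0"
  shows "AE \<gamma> in \<omega>. AE t in lborel. t \<in> {0..<T} \<longrightarrow> (t, \<gamma> t) \<notin> B"
proof -
  interpret sf: sigma_finite_measure \<omega> by (rule sigma_finite)
  interpret ps: pair_sigma_finite \<omega> lborel
    unfolding pair_sigma_finite_def using sigma_finite sigma_finite_lborel by blast
  define P where "P \<gamma> t \<longleftrightarrow> (t \<in> {0..<T} \<longrightarrow> (t, Glim T \<gamma> t) \<notin> B)" for \<gamma> t
  have Gm: "(\<lambda>p. Glim T (fst p) (snd p)) \<in> borel_measurable (\<omega> \<Otimes>\<^sub>M lborel)"
    by (rule Glim_meas[OF T ev sp])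
  have hm: "(\<lambda>p. (snd p, Glim T (fst p) (snd p))) \<in> borel_measurable (\<omega> \<Otimes>\<^sub>M lborel)"
    by (intro borel_measurable_Pair Gm) simp
  have Pm: "{x \<in> space (\<omega> \<Otimes>\<^sub>M lborel). P (fst x) (snd x)} \<in> sets (\<omega> \<Otimes>\<^sub>M lborel)"
  proof -
    have s1: "{x \<in> space (\<omega> \<Otimes>\<^sub>M lborel). snd x \<in> {0..<T}} \<in> sets (\<omega> \<Otimes>\<^sub>M lborel)"
      by measurable
    have s2: "(\<lambda>p. (snd p, Glim T (fst p) (snd p))) -` B \<inter> space (\<omega> \<Otimes>\<^sub>M lborel) \<in> sets (\<omega> \<Otimes>\<^sub>M lborel)"
      using hm Bm by (rule measurable_sets)
    have eq: "{x \<in> space (\<omega> \<Otimes>\<^sub>M lborel). P (fst x) (snd x)} =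
        (space (\<omega> \<Otimes>\<^sub>M lborel) - {x \<in> space (\<omega> \<Otimes>\<^sub>M lborel). snd x \<in> {0..<T}}) \<union>
        (space (\<omega> \<Otimes>\<^sub>M lborel) - ((\<lambda>p. (snd p, Glim T (fst p) (snd p))) -` B \<inter> space (\<omega> \<Otimes>\<^sub>M lborel)))"
      by (auto simp: P_def)
    show ?thesis unfolding eq by (intro sets.Un sets.Diff sets.top s1 s2)
  qed
  have ae1: "AE t in lborel. AE \<gamma> in \<omega>. P \<gamma> t"
    using Bnull
  proof eventually_elim
    case (elim t)
    show ?case
    proof (cases "t \<in> {0..<T}")
      case True
      define A where "A = {p. (t,p) \<in> B}"
      have Ab: "A \<in> sets borel"
      proof -
        have "(\<lambda>p::real\<times>real. (t, p)) \<in> borel_measurable borel" by simp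
        from measurable_sets[OF this Bm] show ?thesis by (simp add: A_def vimage_def)
      qed
      have Al: "A \<in> sets lebesgue" using Ab by simp
      have z: "emeasure lebesgue (A \<inter> E t) = 0" using elim True by (simp add: A_def)
      have "AE \<gamma> in \<omega>. Glim T \<gamma> t \<notin> A"
        by (rule null_bound[OF True approx_open[OF Al Em[OF True] z]])
      then show ?thesis by eventually_elim (simp add: P_def A_def)
    next
      case False
      then show ?thesis by (auto simp: P_def)
    qed
  qed
  have ae2: "AE \<gamma> in \<omega>. AE t in lborel. P \<gamma> t"
    using ae1 ps.AE_commute[OF Pm] by simp
  show ?thesis
    using ae2 AE_space
  proof eventually_elim
    case (elim \<gamma>)
    then have "\<gamma> \<in> Curves T" using sp by simp
    from Glim_eq_ae[OF this] elim(1)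
    show ?case by eventually_elim (auto simp: P_def)
  qed
qed

end


lemma fst_borel[measurable]: "(fst :: real \<times> real \<Rightarrow> real) \<in> borel_measurable borel"
  by (intro borel_measurable_continuous_onI continuous_intros)

lemma snd_borel[measurable]: "(snd :: real \<times> real \<Rightarrow> real) \<in> borel_measurable borel"
  by (intro borel_measurable_continuous_onI continuous_intros)

lemma leb_null_Times:
  fixes N :: "real set"
  assumes "N \<in> null_sets lborel"
  shows "N \<times> (UNIV :: real set) \<in> null_sets (lebesgue :: (real \<times> real) measure)"
proof -
  have "N \<times> (UNIV :: real set) \<in> null_sets (lborel \<Otimes>\<^sub>M lborel)"
    using assms by (intro lborel.times_in_null_sets1) auto
  then have "N \<times> (UNIV :: real set) \<in> null_sets (lborel :: (real \<times> real) measure)"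
    by (simp only: lborel_prod)
  then show ?thesis by (rule null_sets_completionI)
qed

lemma borel_version:
  fixes g :: "real \<Rightarrow> real"
  assumes "g \<in> borel_measurable lebesgue"
  obtains g' N where "g' \<in> borel_measurable borel" "N \<in> null_sets lborel" "\<And>x. x \<notin> N \<Longrightarrow> g x = g' x"
proof -
  obtain g' where g': "g' \<in> borel_measurable lborel" and ae: "AE x in lborel. g x = g' x"
    using completion_ex_borel_measurable_real[OF assms] by blast
  from ae obtain N where N0: "{x \<in> space lborel. \<not> g x = g' x} \<subseteq> N" "emeasure lborel N = 0" "N \<in> sets lborel"
    by (rule AE_E)
  then have N: "N \<in> null_sets lborel" "{x \<in> space lborel. \<not> g x = g' x} \<subseteq> N" by auto
  show ?thesis
  proof (rule that[of g' N])
    show "g' \<in> borel_measurable borel" using g' by simp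
    show "N \<in> null_sets lborel" by fact
    fix x assume "x \<notin> N" then show "g x = g' x" using N(2) by auto
  qed
qed

lemma lborel2_null:
  fixes A :: "(real \<times> real) set"
  assumes A: "A \<in> sets borel" and z: "\<And>x. emeasure lborel (Pair x -` A) = 0"
  shows "A \<in> null_sets (lebesgue :: (real \<times> real) measure)"
proof -
  have A2: "A \<in> sets (lborel \<Otimes>\<^sub>M lborel)" unfolding lborel_prod using A by simp
  have "emeasure (lborel \<Otimes>\<^sub>M lborel) A = (\<integral>\<^sup>+x. emeasure lborel (Pair x -` A) \<partial>lborel)"
    by (rule lborel.emeasure_pair_measure_alt[OF A2])
  also have "\<dots> = 0" using z by simp
  finally have "A \<in> null_sets (lborel \<Otimes>\<^sub>M lborel)" using A2 by auto
  then have "A \<in> null_sets (lborel :: (real \<times> real) measure)" by (simp only: lborel_prod)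
  then show ?thesis by (rule null_sets_completionI)
qed

lemma graph_null:
  fixes g :: "real \<Rightarrow> real"
  assumes g: "g \<in> borel_measurable lebesgue"
  shows "{p. snd p = g (fst p)} \<in> null_sets (lebesgue :: (real \<times> real) measure)"
proof -
  obtain g' N where g': "g' \<in> borel_measurable borel" and N: "N \<in> null_sets lborel"
    and eq: "\<And>x. x \<notin> N \<Longrightarrow> g x = g' x"
    using borel_version[OF g] by blast
  note g'[measurable]
  have Gm: "{p :: real \<times> real. snd p = g' (fst p)} \<in> sets borel"
    using measurable_equality_set[of snd borel "\<lambda>p. g' (fst p)"] by simp
  have G0: "{p :: real \<times> real. snd p = g' (fst p)} \<in> null_sets lebesgue"
  proof (rule lborel2_null[OF Gm])
    fix x
    have "Pair x -` {p :: real \<times> real. snd p = g' (fst p)} = {g' x}" by auto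
    then show "emeasure lborel (Pair x -` {p :: real \<times> real. snd p = g' (fst p)}) = 0" by simp
  qed
  have "{p. snd p = g (fst p)} \<subseteq> {p :: real \<times> real. snd p = g' (fst p)} \<union> N \<times> UNIV"
  proof (rule subsetI)
    fix p :: "real \<times> real" assume p: "p \<in> {p. snd p = g (fst p)}"
    show "p \<in> {p :: real \<times> real. snd p = g' (fst p)} \<union> N \<times> UNIV"
    proof (cases "fst p \<in> N")
      case True then show ?thesis by (cases p) auto
    next
      case False then show ?thesis using eq[OF False] p by auto
    qed
  qed
  moreover have "{p :: real \<times> real. snd p = g' (fst p)} \<union> N \<times> UNIV \<in> null_sets lebesgue"
    using G0 leb_null_Times[OF N] by auto
  ultimately show ?thesis by (rule null_sets_completion_subset)
qed

lemma sets_leb_via: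
  fixes S S' Z :: "(real \<times> real) set"
  assumes "S' \<in> sets borel" "Z \<in> null_sets lebesgue" "S - Z = S' - Z"
  shows "S \<in> sets lebesgue"
proof -
  have "S \<inter> Z \<in> null_sets lebesgue"
    using assms(2) by (rule null_sets_completion_subset[rotated]) auto
  moreover have "S' - Z \<in> sets lebesgue" using assms(1,2) by auto
  moreover have "S = (S' - Z) \<union> (S \<inter> Z)" using assms(3) by blast
  ultimately show ?thesis by (metis null_setsD2 sets.Un)
qed

lemma hypo_meas:
  fixes g :: "real \<Rightarrow> real"
  assumes g: "g \<in> borel_measurable lebesgue"
  shows "hypo g \<in> sets lebesgue" "epi g \<in> sets lebesgue"
proof -
  obtain g' N where g': "g' \<in> borel_measurable borel" and N: "N \<in> null_sets lborel"
    and eq: "\<And>x. x \<notin> N \<Longrightarrow> g x = g' x"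
    using borel_version[OF g] by blast
  note g'[measurable]
  have Z: "N \<times> (UNIV::real set) \<in> null_sets (lebesgue :: (real \<times> real) measure)" by (rule leb_null_Times[OF N])
  have h': "{p :: real \<times> real. 0 \<le> snd p \<and> snd p \<le> 1 \<and> snd p \<le> g' (fst p)} \<in> sets borel" by measurable
  have e': "{p :: real \<times> real. 0 \<le> snd p \<and> snd p \<le> 1 \<and> snd p \<ge> g' (fst p)} \<in> sets borel" by measurable
  show "hypo g \<in> sets lebesgue"
    by (rule sets_leb_via[OF h' Z]) (auto simp: hypo_def eq)
  show "epi g \<in> sets lebesgue"
    by (rule sets_leb_via[OF e' Z]) (auto simp: epi_def eq)
qed

lemma strip_measure:
  fixes a h :: "real \<Rightarrow> real"
  assumes a: "a \<in> borel_measurable lebesgue" and h: "h \<in> borel_measurable lebesgue"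
    and S: "S \<subseteq> {p. a (fst p) \<le> snd p \<and> snd p \<le> a (fst p) + h (fst p)}"
  shows "emeasure lebesgue S \<le> (\<integral>\<^sup>+x. ennreal (h x) \<partial>lebesgue)"
proof -
  obtain a' Na where a': "a' \<in> borel_measurable borel" and Na: "Na \<in> null_sets lborel"
    and eqa: "\<And>x. x \<notin> Na \<Longrightarrow> a x = a' x"
    using borel_version[OF a] by blast
  obtain h' Nh where h': "h' \<in> borel_measurable borel" and Nh: "Nh \<in> null_sets lborel"
    and eqh: "\<And>x. x \<notin> Nh \<Longrightarrow> h x = h' x"
    using borel_version[OF h] by blast
  note a'[measurable] h'[measurable]
  define R' where "R' = {p :: real \<times> real. a' (fst p) \<le> snd p \<and> snd p \<le> a' (fst p) + h' (fst p)}"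
  have R'm: "R' \<in> sets borel" unfolding R'_def by measurable
  have NN: "Na \<union> Nh \<in> null_sets lborel" using Na Nh by auto
  define Zs where "Zs = (Na \<union> Nh) \<times> (UNIV::real set)"
  have Z: "Zs \<in> null_sets (lebesgue :: (real \<times> real) measure)" unfolding Zs_def by (rule leb_null_Times[OF NN])
  have sub: "S \<subseteq> R' \<union> Zs"
  proof
    fix p :: "real \<times> real" assume "p \<in> S"
    then have p: "a (fst p) \<le> snd p" "snd p \<le> a (fst p) + h (fst p)" using S by auto
    show "p \<in> R' \<union> Zs"
    proof (cases "fst p \<in> Na \<union> Nh")
      case True then show ?thesis by (cases p) (auto simp: Zs_def)
    next
      case False then show ?thesis using p eqa[of "fst p"] eqh[of "fst p"] by (auto simp: R'_def)
    qed
  qed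
  have "emeasure lebesgue S \<le> emeasure lebesgue (R' \<union> Zs)"
    using sub by (rule emeasure_mono) (use R'm Z in auto)
  also have "\<dots> \<le> emeasure lebesgue R' + emeasure lebesgue (Zs)"
    by (intro emeasure_subadditive) (use R'm Z in auto)
  also have "\<dots> = emeasure lborel R'" using null_setsD1[OF Z] R'm by simp
  also have "\<dots> = emeasure (lborel \<Otimes>\<^sub>M lborel) R'" by (simp only: lborel_prod)
  also have "\<dots> = (\<integral>\<^sup>+x. emeasure lborel (Pair x -` R') \<partial>lborel)"
    using R'm by (intro lborel.emeasure_pair_measure_alt) (simp only: lborel_prod sets_lborel)
  also have "\<dots> = (\<integral>\<^sup>+x. ennreal (h' x) \<partial>lborel)"
  proof (intro nn_integral_cong)
    fix x
    have "Pair x -` R' = {a' x .. a' x + h' x}" by (auto simp: R'_def)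
    then show "emeasure lborel (Pair x -` R') = ennreal (h' x)"
      by (simp add: emeasure_lborel_Icc_eq ennreal_neg)
  qed
  also have "\<dots> = (\<integral>\<^sup>+x. ennreal (h x) \<partial>lborel)"
  proof (rule nn_integral_cong_AE)
    show "AE x in lborel. ennreal (h' x) = ennreal (h x)"
      using AE_not_in[OF Nh] by eventually_elim (simp add: eqh)
  qed
  also have "\<dots> = (\<integral>\<^sup>+x. ennreal (h x) \<partial>lebesgue)" by (simp add: nn_integral_completion)
  finally show ?thesis .
qed


lemma lebpt_transfer:
  fixes u :: "real \<Rightarrow> real \<Rightarrow> real" and f :: "real \<times> real \<Rightarrow> real"
  assumes t: "0 < t" "t < T"
    and feq: "\<And>p. fst p \<in> {0..T} \<Longrightarrow> f p = u (fst p) (snd p)"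
    and good: "\<forall>\<delta>>0. eventually (\<lambda>r. (LINT p:ball (t,x) r|lebesgue. \<bar>f p - f (t,x)\<bar>)
                 \<le> \<delta> * measure lebesgue (ball (t,x) r)) (at_right 0)"
  shows "lebesgue_point u (t,x) (u t x)"
proof -
  define C where "C = measure lebesgue (ball (0::real\<times>real) 1)"
  have Cpos: "C > 0" using content_ball_pos[of 1 "0::real\<times>real"] by (simp add: C_def)
  have mb: "measure lebesgue (ball (t,x) r) = r^2 * C" if "r \<ge> 0" for r
    using content_ball_conv_unit_ball[OF that, of "(t,x)"] by (simp add: C_def power2_eq_square)
  have fz: "f (t,x) = u t x" using feq t by simp
  show ?thesis unfolding lebesgue_point_def tendsto_iff
  proof (intro allI impI)
    fix e :: real assume e: "e > 0"
    define \<delta> where "\<delta> = e / (2*C)"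
    have \<delta>: "\<delta> > 0" using e Cpos by (simp add: \<delta>_def)
    have ev1: "eventually (\<lambda>r. (LINT p:ball (t,x) r|lebesgue. \<bar>f p - f (t,x)\<bar>)
                 \<le> \<delta> * measure lebesgue (ball (t,x) r)) (at_right 0)" using good \<delta> by blast
    have ev2: "eventually (\<lambda>r. 0 < r \<and> r < min t (T - t)) (at_right (0::real))"
      unfolding eventually_at_right_field using t by (intro exI[of _ "min t (T - t)"]) auto
    from ev1 ev2
    show "eventually (\<lambda>r. dist ((LINT p:ball (t,x) r|lebesgue. \<bar>u (fst p) (snd p) - u t x\<bar>) / r\<^sup>2) 0 < e) (at_right 0)"
    proof eventually_elim
      case (elim r)
      have sub: "fst p \<in> {0..T}" if "p \<in> ball (t,x) r" for p
      proof -
        have "dist t (fst p) \<le> dist (t,x) p" using dist_fst_le[of "(t,x)" p] by simp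
        also have "\<dots> < r" using that by simp
        finally have "\<bar>t - fst p\<bar> < r" by (simp add: dist_real_def)
        then show ?thesis using elim by auto
      qed
      have eqI: "(LINT p:ball (t,x) r|lebesgue. \<bar>u (fst p) (snd p) - u t x\<bar>) = (LINT p:ball (t,x) r|lebesgue. \<bar>f p - f (t,x)\<bar>)"
        by (rule set_lebesgue_integral_cong) (use sub feq fz in auto)
      have nn: "0 \<le> (LINT p:ball (t,x) r|lebesgue. \<bar>u (fst p) (snd p) - u t x\<bar>)"
        unfolding set_lebesgue_integral_def by (intro integral_nonneg_AE AE_I2) simp
      have le: "(LINT p:ball (t,x) r|lebesgue. \<bar>u (fst p) (snd p) - u t x\<bar>) \<le> (\<delta> * C) * r^2"
        using elim eqI mb[of r] by (simp add: algebra_simps)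
      have r2: "r^2 > 0" using elim by simp
      have "(LINT p:ball (t,x) r|lebesgue. \<bar>u (fst p) (snd p) - u t x\<bar>) / r^2 \<le> \<delta> * C"
        using le r2 by (simp add: pos_divide_le_eq)
      also have "\<dots> < e" using e Cpos by (simp add: \<delta>_def)
      finally show ?case using nn r2 by (simp add: dist_real_def)
    qed
  qed
qed

lemma diff_strip:
  fixes g1 g2 :: "real \<Rightarrow> real"
  shows "hypo g1 - hypo g2 \<subseteq> {p. min (g1 (fst p)) (g2 (fst p)) \<le> snd p \<and>
            snd p \<le> min (g1 (fst p)) (g2 (fst p)) + \<bar>g1 (fst p) - g2 (fst p)\<bar>}"
    and "epi g1 - epi g2 \<subseteq> {p. min (g1 (fst p)) (g2 (fst p)) \<le> snd p \<and>
            snd p \<le> min (g1 (fst p)) (g2 (fst p)) + \<bar>g1 (fst p) - g2 (fst p)\<bar>}"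
proof -
  show "hypo g1 - hypo g2 \<subseteq> {p. min (g1 (fst p)) (g2 (fst p)) \<le> snd p \<and>
            snd p \<le> min (g1 (fst p)) (g2 (fst p)) + \<bar>g1 (fst p) - g2 (fst p)\<bar>}"
  proof
    fix p assume "p \<in> hypo g1 - hypo g2"
    then have a: "snd p \<le> g1 (fst p)" "g2 (fst p) < snd p" by (cases p; auto simp: hypo_def)+
    then have "min (g1 (fst p)) (g2 (fst p)) = g2 (fst p)" "\<bar>g1 (fst p) - g2 (fst p)\<bar> = g1 (fst p) - g2 (fst p)"
      by auto
    then show "p \<in> {p. min (g1 (fst p)) (g2 (fst p)) \<le> snd p \<and>
            snd p \<le> min (g1 (fst p)) (g2 (fst p)) + \<bar>g1 (fst p) - g2 (fst p)\<bar>}" using a by simp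
  qed
  show "epi g1 - epi g2 \<subseteq> {p. min (g1 (fst p)) (g2 (fst p)) \<le> snd p \<and>
            snd p \<le> min (g1 (fst p)) (g2 (fst p)) + \<bar>g1 (fst p) - g2 (fst p)\<bar>}"
  proof
    fix p assume "p \<in> epi g1 - epi g2"
    then have a: "g1 (fst p) \<le> snd p" "snd p < g2 (fst p)" by (cases p; auto simp: epi_def)+
    then have "min (g1 (fst p)) (g2 (fst p)) = g1 (fst p)" "\<bar>g1 (fst p) - g2 (fst p)\<bar> = g2 (fst p) - g1 (fst p)"
      by auto
    then show "p \<in> {p. min (g1 (fst p)) (g2 (fst p)) \<le> snd p \<and>
            snd p \<le> min (g1 (fst p)) (g2 (fst p)) + \<bar>g1 (fst p) - g2 (fst p)\<bar>}" using a by simp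
  qed
qed

lemma Econt_gen:
  fixes u :: "real \<Rightarrow> real \<Rightarrow> real" and E :: "real \<Rightarrow> (real \<times> real) set"
  assumes integ: "\<forall>t\<in>{0..T}. integrable lebesgue (u t)"
    and cont: "\<forall>t\<in>{0..T}. ((\<lambda>s. LINT x|lebesgue. \<bar>u s x - u t x\<bar>) \<longlongrightarrow> 0) (at t within {0..T})"
    and sub: "\<And>s t. E s - E t \<subseteq> {p. min (u s (fst p)) (u t (fst p)) \<le> snd p \<and>
            snd p \<le> min (u s (fst p)) (u t (fst p)) + \<bar>u s (fst p) - u t (fst p)\<bar>}"
    and t: "t \<in> {0..<T}"
  shows "((\<lambda>s. emeasure lebesgue (E s - E t)) \<longlongrightarrow> 0) (at t within {0..<T})"
proof (rule tendsto_sandwich[of "\<lambda>_. 0" _ _ "\<lambda>s. ennreal (LINT x|lebesgue. \<bar>u s x - u t x\<bar>)"])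
  show "\<forall>\<^sub>F s in at t within {0..<T}. 0 \<le> emeasure lebesgue (E s - E t)" by simp
  show "((\<lambda>_. 0::ennreal) \<longlongrightarrow> 0) (at t within {0..<T})" by simp
  have tT: "t \<in> {0..T}" using t by auto
  have "((\<lambda>s. LINT x|lebesgue. \<bar>u s x - u t x\<bar>) \<longlongrightarrow> 0) (at t within {0..<T})"
  proof (rule tendsto_within_subset)
    show "((\<lambda>s. LINT x|lebesgue. \<bar>u s x - u t x\<bar>) \<longlongrightarrow> 0) (at t within {0..T})"
      using cont tT by blast
  qed auto
  then have "((\<lambda>s. ennreal (LINT x|lebesgue. \<bar>u s x - u t x\<bar>)) \<longlongrightarrow> ennreal 0) (at t within {0..<T})"
    by (rule tendsto_ennrealI)
  then show "((\<lambda>s. ennreal (LINT x|lebesgue. \<bar>u s x - u t x\<bar>)) \<longlongrightarrow> 0) (at t within {0..<T})" by simp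
  have "emeasure lebesgue (E s - E t) \<le> ennreal (LINT x|lebesgue. \<bar>u s x - u t x\<bar>)" if s: "s \<in> {0..<T}" for s
  proof -
    have sT: "s \<in> {0..T}" using s by auto
    have iS: "integrable lebesgue (u s)" and iT: "integrable lebesgue (u t)" using integ sT tT by auto
    have ms: "u s \<in> borel_measurable lebesgue" and mt: "u t \<in> borel_measurable lebesgue"
      using iS iT by auto
    have ia: "integrable lebesgue (\<lambda>x. \<bar>u s x - u t x\<bar>)" using iS iT by auto
    have "emeasure lebesgue (E s - E t) \<le> (\<integral>\<^sup>+x. ennreal \<bar>u s x - u t x\<bar> \<partial>lebesgue)"
    proof (rule strip_measure[of "\<lambda>x. min (u s x) (u t x)" "\<lambda>x. \<bar>u s x - u t x\<bar>" "E s - E t"])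
      note ms[measurable] mt[measurable]
      show "(\<lambda>x. min (u s x) (u t x)) \<in> borel_measurable lebesgue" by measurable
      show "(\<lambda>x. \<bar>u s x - u t x\<bar>) \<in> borel_measurable lebesgue" by measurable
      show "E s - E t \<subseteq> {p. min (u s (fst p)) (u t (fst p)) \<le> snd p \<and>
            snd p \<le> min (u s (fst p)) (u t (fst p)) + \<bar>u s (fst p) - u t (fst p)\<bar>}" by (rule sub)
    qed
    also have "\<dots> = ennreal (LINT x|lebesgue. \<bar>u s x - u t x\<bar>)"
      using ia by (intro nn_integral_eq_integral) auto
    finally show ?thesis .
  qed
  then show "\<forall>\<^sub>F s in at t within {0..<T}. emeasure lebesgue (E s - E t) \<le> ennreal (LINT x|lebesgue. \<bar>u s x - u t x\<bar>)"
    by (auto simp: eventually_at_filter intro!: always_eventually)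
qed


lemma fst3_borel[measurable]: "(\<lambda>q::real \<times> (real \<times> real). (fst q, fst (snd q))) \<in> borel_measurable borel"
  by (intro borel_measurable_continuous_onI continuous_intros)

lemma snd3_borel[measurable]: "(\<lambda>q::real \<times> (real \<times> real). snd (snd q)) \<in> borel_measurable borel"
  by (intro borel_measurable_continuous_onI continuous_intros)

theorem lemma2p3:
  fixes T :: real and u :: "real \<Rightarrow> real \<Rightarrow> real"
    and \<omega>h \<omega>e :: "(real \<Rightarrow> real \<times> real) measure"
  assumes "T > 0"
    and "bounded_weak_sol_fep T u"
    and "\<forall>t\<in>{0..T}. \<forall>x. 0 \<le> u t x \<and> u t x \<le> 1"
    and "lagrangian_rep_hypo T u \<omega>h"
    and "lagrangian_rep_epi T u \<omega>e"
  shows "(AE \<gamma> in \<omega>h. AE t in lborel. t \<in> {0..T} \<longrightarrow>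
            (\<exists>c. lebesgue_point u (t, fst (\<gamma> t)) c \<and> snd (\<gamma> t) < c))
       \<and> (AE \<gamma> in \<omega>e. AE t in lborel. t \<in> {0..T} \<longrightarrow>
            (\<exists>c. lebesgue_point u (t, fst (\<gamma> t)) c \<and> snd (\<gamma> t) > c))"
proof -
  note T = assms(1)
  have C0: "C0_L1_Linfty T u" using assms(2) by (simp add: bounded_weak_sol_fep_def)
  have sbm: "set_borel_measurable lebesgue ({0..T} \<times> UNIV) (\<lambda>p. u (fst p) (snd p))"
    and integ: "\<forall>t\<in>{0..T}. integrable lebesgue (u t)"
    and cont: "\<forall>t\<in>{0..T}. ((\<lambda>s. LINT x|lebesgue. \<bar>u s x - u t x\<bar>) \<longlongrightarrow> 0) (at t within {0..T})"
    using C0 unfolding C0_L1_Linfty_def by auto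
  have u01: "\<And>t x. t \<in> {0..T} \<Longrightarrow> 0 \<le> u t x \<and> u t x \<le> 1" using assms(3) by blast
  define f where "f p = indicator ({0..T} \<times> (UNIV::real set)) p *\<^sub>R u (fst p) (snd p)" for p :: "real \<times> real"
  have fm: "f \<in> borel_measurable lebesgue"
    using sbm unfolding set_borel_measurable_def f_def by simp
  have feq: "f p = u (fst p) (snd p)" if "fst p \<in> {0..T}" for p
    using that by (cases p) (simp add: f_def)
  have f01: "0 \<le> f z \<and> f z \<le> 1" for z
    using u01[of "fst z" "snd z"] by (cases z) (auto simp: f_def indicator_def)
  define NL where "NL = {z. \<not> (\<forall>\<delta>>0. eventually (\<lambda>r. (LINT p:ball z r|lebesgue. \<bar>f p - f z\<bar>)
             \<le> \<delta> * measure lebesgue (ball z r)) (at_right 0))}"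
  have "negligible NL" unfolding NL_def by (rule lebesgue_points_negligible[OF fm f01])
  then have "NL \<in> null_sets (completion lborel)" by (simp add: negligible_iff_null_sets)
  then obtain N1 where N1: "N1 \<in> null_sets lborel" "NL \<subseteq> N1"
    unfolding null_sets_completion_iff2 by blast
  obtain ut where utm: "ut \<in> borel_measurable lborel" and aeu: "AE z in lborel. f z = ut z"
    using completion_ex_borel_measurable_real[OF fm] by blast
  from aeu obtain N2 where N2: "{z \<in> space lborel. \<not> f z = ut z} \<subseteq> N2" "emeasure lborel N2 = 0" "N2 \<in> sets lborel"
    by (rule AE_E)
  define N' where "N' = N1 \<union> N2"
  have N2n: "N2 \<in> null_sets lborel" using N2(2,3) by (simp add: null_sets_def)
  have N'null: "N' \<in> null_sets lborel" unfolding N'_def using N1(1) N2n by (rule null_sets.Un)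
  have N'b[measurable]: "N' \<in> sets borel" using N'null by auto
  have utb[measurable]: "ut \<in> borel_measurable borel" using utm by simp
  have KP: "lebesgue_point u (t, x) (u t x) \<and> ut (t, x) = u t x"
    if tx: "0 < t" "t < T" "(t, x) \<notin> N'" for t x
  proof
    have "(t, x) \<notin> NL" using tx N1 by (auto simp: N'_def)
    then have good: "\<forall>\<delta>>0. eventually (\<lambda>r. (LINT p:ball (t,x) r|lebesgue. \<bar>f p - f (t,x)\<bar>)
             \<le> \<delta> * measure lebesgue (ball (t,x) r)) (at_right 0)"
      unfolding NL_def by blast
    show "lebesgue_point u (t, x) (u t x)"
      by (rule lebpt_transfer[OF tx(1,2) feq good]) simp
    have "(t, x) \<notin> N2" using tx by (auto simp: N'_def)
    then have "f (t, x) = ut (t, x)" using N2(1) by auto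
    then show "ut (t, x) = u t x" using feq[of "(t,x)"] tx by simp
  qed
  have SN: "AE t in lborel. {x. (t, x) \<in> N'} \<in> null_sets lborel"
  proof -
    have "N' \<in> null_sets (lborel \<Otimes>\<^sub>M lborel)" using N'null by (simp only: lborel_prod)
    then have "AE p in lborel \<Otimes>\<^sub>M lborel. p \<notin> N'" by (rule AE_not_in)
    then have "AE t in lborel. AE x in lborel. (t, x) \<notin> N'" by (rule lborel_pair.AE_pair)
    then show ?thesis
    proof eventually_elim
      case (elim t)
      have "N' \<in> sets (lborel \<Otimes>\<^sub>M lborel)" unfolding lborel_prod using N'b by simp
      then have "Pair t -` N' \<in> sets lborel" by (rule sets_Pair1)
      then have m: "{x. (t, x) \<in> N'} \<in> sets lborel" by (simp add: vimage_def)
      show ?case using elim by (subst AE_iff_null_sets[OF m]) simp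
    qed
  qed
  have um: "u t \<in> borel_measurable lebesgue" if "t \<in> {0..T}" for t
    using integ that by auto
  have graph0: "emeasure lebesgue ({p. snd p = u t (fst p)}) = 0" if "t \<in> {0..T}" for t
    using graph_null[OF um[OF that]] by auto
  have ttt: "AE t in lborel. t \<notin> {0, T}"
    by (rule AE_not_in) (auto intro: finite_imp_null_set_lborel)
  show ?thesis
  proof
    define B where "B = {q :: real \<times> (real \<times> real). (fst q, fst (snd q)) \<in> N' \<or> ut (fst q, fst (snd q)) \<le> snd (snd q)}"
    have Bm: "B \<in> sets borel" unfolding B_def by measurable
    have LR: "lagrangian_rep T {0..<T} (\<lambda>t. hypo (u t)) \<omega>h"
      using assms(4) by (simp add: lagrangian_rep_hypo_def)
    interpret L: LS T \<omega>h "\<lambda>t. hypo (u t)"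
    proof
      show "T > 0" by fact
      show "space \<omega>h = Curves T" using LR by (simp add: lagrangian_rep_def)
      fix c assume c: "c \<in> {0..<T}"
      show "(\<lambda>\<gamma>. \<gamma> c) \<in> measurable \<omega>h lborel" using LR c by (simp add: lagrangian_rep_def)
      show "\<And>A. A \<in> sets lborel \<Longrightarrow> emeasure (distr \<omega>h lborel (\<lambda>\<gamma>. \<gamma> c)) A = emeasure lebesgue (A \<inter> hypo (u c))"
        using LR c by (simp add: lagrangian_rep_def)
      show "hypo (u c) \<in> sets lebesgue" using hypo_meas(1)[OF um] c by simp
      show "((\<lambda>s. emeasure lebesgue (hypo (u s) - hypo (u c))) \<longlongrightarrow> 0) (at c within {0..<T})"
        by (rule Econt_gen[OF integ cont diff_strip(1) c])
    qed
    have Bnull: "AE t in lborel. t \<in> {0..<T} \<longrightarrow> emeasure lebesgue ({p. (t,p) \<in> B} \<inter> hypo (u t)) = 0"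
      using SN
    proof eventually_elim
      case (elim t)
      show ?case
      proof
        assume t: "t \<in> {0..<T}"
        then have tT: "t \<in> {0..T}" by auto
        have sub: "{p. (t,p) \<in> B} \<inter> hypo (u t) \<subseteq> {x. (t, x) \<in> N'} \<times> UNIV \<union> {p. snd p = u t (fst p)}"
        proof
          fix p assume p: "p \<in> {p. (t,p) \<in> B} \<inter> hypo (u t)"
          obtain x v where pxv: "p = (x, v)" by (cases p)
          show "p \<in> {x. (t, x) \<in> N'} \<times> UNIV \<union> {p. snd p = u t (fst p)}"
          proof (cases "(t, x) \<in> N'")
            case True then show ?thesis using pxv by auto
          next
            case False
            then have nN2: "(t, x) \<notin> N2" by (auto simp: N'_def)
            have "f (t, x) = ut (t, x)" using N2(1) nN2 by auto
            then have "ut (t, x) = f (t, x)" by simp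
            also have "\<dots> = u t x" using feq[of "(t, x)"] tT by simp
            finally have e: "ut (t, x) = u t x" .
            have "ut (t, x) \<le> v" "v \<le> u t x" using p pxv False by (auto simp: B_def hypo_def)
            then show ?thesis using e pxv by auto
          qed
        qed
        have "{x. (t, x) \<in> N'} \<times> (UNIV :: real set) \<in> null_sets (lebesgue :: (real \<times> real) measure)"
          by (rule leb_null_Times[OF elim])
        moreover have "{p. snd p = u t (fst p)} \<in> null_sets (lebesgue :: (real \<times> real) measure)"
          by (rule graph_null[OF um[OF tT]])
        ultimately have "{x. (t, x) \<in> N'} \<times> (UNIV :: real set) \<union> {p. snd p = u t (fst p)} \<in> null_sets lebesgue"
          by auto
        then have "{p. (t,p) \<in> B} \<inter> hypo (u t) \<in> null_sets lebesgue"
          using sub by (rule null_sets_completion_subset[rotated])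
        then show "emeasure lebesgue ({p. (t,p) \<in> B} \<inter> hypo (u t)) = 0" by auto
      qed
    qed
    have ae: "AE \<gamma> in \<omega>h. AE t in lborel. t \<in> {0..<T} \<longrightarrow> (t, \<gamma> t) \<notin> B"
      by (rule L.main_generic[OF Bm Bnull])
    show "AE \<gamma> in \<omega>h. AE t in lborel. t \<in> {0..T} \<longrightarrow>
            (\<exists>c. lebesgue_point u (t, fst (\<gamma> t)) c \<and> snd (\<gamma> t) < c)"
      using ae
    proof eventually_elim
      case (elim \<gamma>)
      from elim ttt show ?case
      proof eventually_elim
        case (elim t)
        show ?case
        proof
          assume "t \<in> {0..T}"
          then have t: "0 < t" "t < T" "t \<in> {0..<T}" using elim(2) by auto
          have nB: "(t, \<gamma> t) \<notin> B" using elim(1) t by blast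
          then have n1: "(t, fst (\<gamma> t)) \<notin> N'" and n2: "\<not> ut (t, fst (\<gamma> t)) \<le> snd (\<gamma> t)"
            by (auto simp: B_def)
          from KP[OF t(1,2) n1] n2
          show "\<exists>c. lebesgue_point u (t, fst (\<gamma> t)) c \<and> snd (\<gamma> t) < c" by auto
        qed
      qed
    qed
  next
    define B where "B = {q :: real \<times> (real \<times> real). (fst q, fst (snd q)) \<in> N' \<or> snd (snd q) \<le> ut (fst q, fst (snd q))}"
    have Bm: "B \<in> sets borel" unfolding B_def by measurable
    have LR: "lagrangian_rep T {0..T} (\<lambda>t. epi (u t)) \<omega>e"
      using assms(5) by (simp add: lagrangian_rep_epi_def)
    interpret L: LS T \<omega>e "\<lambda>t. epi (u t)"
    proof
      show "T > 0" by fact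
      show "space \<omega>e = Curves T" using LR by (simp add: lagrangian_rep_def)
      fix c assume c: "c \<in> {0..<T}"
      then have c': "c \<in> {0..T}" by auto
      show "(\<lambda>\<gamma>. \<gamma> c) \<in> measurable \<omega>e lborel" using LR c' by (simp add: lagrangian_rep_def)
      show "\<And>A. A \<in> sets lborel \<Longrightarrow> emeasure (distr \<omega>e lborel (\<lambda>\<gamma>. \<gamma> c)) A = emeasure lebesgue (A \<inter> epi (u c))"
        using LR c' by (simp add: lagrangian_rep_def)
      show "epi (u c) \<in> sets lebesgue" using hypo_meas(2)[OF um] c by simp
      show "((\<lambda>s. emeasure lebesgue (epi (u s) - epi (u c))) \<longlongrightarrow> 0) (at c within {0..<T})"
        by (rule Econt_gen[OF integ cont diff_strip(2) c])
    qed
    have Bnull: "AE t in lborel. t \<in> {0..<T} \<longrightarrow> emeasure lebesgue ({p. (t,p) \<in> B} \<inter> epi (u t)) = 0"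
      using SN
    proof eventually_elim
      case (elim t)
      show ?case
      proof
        assume t: "t \<in> {0..<T}"
        then have tT: "t \<in> {0..T}" by auto
        have sub: "{p. (t,p) \<in> B} \<inter> epi (u t) \<subseteq> {x. (t, x) \<in> N'} \<times> UNIV \<union> {p. snd p = u t (fst p)}"
        proof
          fix p assume p: "p \<in> {p. (t,p) \<in> B} \<inter> epi (u t)"
          obtain x v where pxv: "p = (x, v)" by (cases p)
          show "p \<in> {x. (t, x) \<in> N'} \<times> UNIV \<union> {p. snd p = u t (fst p)}"
          proof (cases "(t, x) \<in> N'")
            case True then show ?thesis using pxv by auto
          next
            case False
            then have nN2: "(t, x) \<notin> N2" by (auto simp: N'_def)
            have "f (t, x) = ut (t, x)" using N2(1) nN2 by auto
            then have "ut (t, x) = f (t, x)" by simp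
            also have "\<dots> = u t x" using feq[of "(t, x)"] tT by simp
            finally have e: "ut (t, x) = u t x" .
            have "v \<le> ut (t, x)" "u t x \<le> v" using p pxv False by (auto simp: B_def epi_def)
            then show ?thesis using e pxv by auto
          qed
        qed
        have "{x. (t, x) \<in> N'} \<times> (UNIV :: real set) \<in> null_sets (lebesgue :: (real \<times> real) measure)"
          by (rule leb_null_Times[OF elim])
        moreover have "{p. snd p = u t (fst p)} \<in> null_sets (lebesgue :: (real \<times> real) measure)"
          by (rule graph_null[OF um[OF tT]])
        ultimately have "{x. (t, x) \<in> N'} \<times> (UNIV :: real set) \<union> {p. snd p = u t (fst p)} \<in> null_sets lebesgue"
          by auto
        then have "{p. (t,p) \<in> B} \<inter> epi (u t) \<in> null_sets lebesgue"
          using sub by (rule null_sets_completion_subset[rotated])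
        then show "emeasure lebesgue ({p. (t,p) \<in> B} \<inter> epi (u t)) = 0" by auto
      qed
    qed
    have ae: "AE \<gamma> in \<omega>e. AE t in lborel. t \<in> {0..<T} \<longrightarrow> (t, \<gamma> t) \<notin> B"
      by (rule L.main_generic[OF Bm Bnull])
    show "AE \<gamma> in \<omega>e. AE t in lborel. t \<in> {0..T} \<longrightarrow>
            (\<exists>c. lebesgue_point u (t, fst (\<gamma> t)) c \<and> snd (\<gamma> t) > c)"
      using ae
    proof eventually_elim
      case (elim \<gamma>)
      from elim ttt show ?case
      proof eventually_elim
        case (elim t)
        show ?case
        proof
          assume "t \<in> {0..T}"
          then have t: "0 < t" "t < T" "t \<in> {0..<T}" using elim(2) by auto
          have nB: "(t, \<gamma> t) \<notin> B" using elim(1) t by blast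
          then have n1: "(t, fst (\<gamma> t)) \<notin> N'" and n2: "\<not> snd (\<gamma> t) \<le> ut (t, fst (\<gamma> t))"
            by (auto simp: B_def)
          from KP[OF t(1,2) n1] n2
          show "\<exists>c. lebesgue_point u (t, fst (\<gamma> t)) c \<and> snd (\<gamma> t) > c" by auto
        qed
      qed
    qed
  qed
qed


end
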